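(* The enveloping operad $\mathrm{Env}(\mathrm{Bulle})$ of the $2$-coloured operad $\mathrm{Bulle}$ is isomorphic to the operad $\mathrm{CNCB}$ of bicoloured noncrossing configurations. That is, $\mathrm{Bulle}$ is a $2$-bubble decomposition of $\mathrm{CNCB}$.
   Context: BNCs: for $n\ge2$, a bicoloured noncrossing configuration (BNC) of size $n$ is a regular polygon with vertices $1,\dots,n+1$ clockwise, together with disjoint sets of blue arcs and red arcs among the arcs $(i,j)$, $1\le i<j\le n+1$. The arcs $(i,i+1)$ are the edges ($i$th edge), $(1,n+1)$ is the base, and the other arcs are diagonals. The conditions are: coloured (blue or red) arcs are pairwise noncrossing ($(i,j),(k,l)$ cross iff $i<k<j<l$ or $k<i<l<j$), and red arcs are diagonals. There is one BNC of size $1$: a blue segment. The operad $\mathrm{CNCB}$ has BNCs as elements (arity = size) and unit the size-$1$ BNC. Its composition $\mathfrak C\circ_i\mathfrak D$ ($\mathfrak C$ of size $n$, $\mathfrak D$ of size $m$) glues the base of $\mathfrak D$ onto the $i$th edge of $\mathfrak C$. Arcs $(a,b)$ of $\mathfrak C$ go to $(\sigma(a),\sigma(b))$ with $\sigma(v)=v$ for $v\le i$ and $v+m-1$ otherwise, and arcs $(a,b)$ of $\mathfrak D$ go to $(a+i-1,b+i-1)$, all keeping their colours. The exception is the arc $(i,i+m)$, which is red if the $i$th edge of $\mathfrak C$ and the base of $\mathfrak D$ are both uncoloured, blue if both are blue, and uncoloured otherwise. $\mathrm{Bulle}$: a bubble is a BNC of size $\ge2$ without coloured diagonals. Its output colour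 is $1$ if its base is blue and $2$ otherwise, and its $i$th input colour is $1$ if its $i$th edge is uncoloured and $2$ if blue. $\mathrm{Bulle}$ is the $2$-coloured operad of bubbles plus two units $\mathbf 1_1,\mathbf 1_2$, with composition that of $\mathrm{CNCB}$, defined exactly when the output colour of the second argument equals the $i$th input colour of the first. Equivalently, a bubble is encoded by $(c;d_1\cdots d_n)$ (output colour, word of input colours), and composition is substitution of the word of the second bubble at position $i$. Enveloping operad: for a coloured operad $\mathcal C$ whose arity-$1$ elements are exactly its units, with $\mathcal C^+$ its elements of arity $\ge2$, $\mathrm{Env}(\mathcal C)$ is the quotient of the free uncoloured operad on $\mathcal C^+$ (colours forgotten) by the smallest operadic congruence with $\mathfrak c(x)\circ_i\mathfrak c(y)\equiv\mathfrak c(x\circ_i y)$ whenever $x\circ_i y$ is defined in $\mathcal C$. Here $\mathfrak c(x)$ is the corolla labelled $x$. *)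

theory Defs
  imports Main
begin

text \<open>A BNC is represented as a triple (n, B, R): its size n, the set B of blue arcs and
the set R of red arcs.  An arc (i,j) is a pair of vertices with 1 <= i < j <= n+1.\<close>

type_synonym arc = "nat \<times> nat"
type_synonym bnc = "nat \<times> arc set \<times> arc set"

definition arcs :: "nat \<Rightarrow> arc set" where
  "arcs n = {(i,j). 1 \<le> i \<and> i < j \<and> j \<le> n + 1}"

definition is_diagonal :: "nat \<Rightarrow> arc \<Rightarrow> bool" where
  "is_diagonal n a = (a \<in> arcs n \<and> snd a \<noteq> fst a + 1 \<and> a \<noteq> (1, n + 1))"

definition crossing :: "arc \<Rightarrow> arc \<Rightarrow> bool" where
  "crossing a b = (let (i,j) = a; (k,l) = b in (i < k \<and> k < j \<and> j < l) \<or> (k < i \<and> i < l \<and> l < j))"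

definition bsize :: "bnc \<Rightarrow> nat" where "bsize c = fst c"
definition blue :: "bnc \<Rightarrow> arc set" where "blue c = fst (snd c)"
definition red :: "bnc \<Rightarrow> arc set" where "red c = snd (snd c)"

text \<open>The unique BNC of size 1: a blue segment.\<close>
definition bnc_unit :: bnc where "bnc_unit = (1, {(1,2)}, {})"

definition is_bnc :: "bnc \<Rightarrow> bool" where
  "is_bnc c = (c = bnc_unit \<or>
     (let n = bsize c; B = blue c; R = red c in
        n \<ge> 2 \<and> B \<union> R \<subseteq> arcs n \<and> B \<inter> R = {} \<and>
        (\<forall>a\<in>B \<union> R. \<forall>b\<in>B \<union> R. \<not> crossing a b) \<and>
        (\<forall>a\<in>R. is_diagonal n a)))"

text \<open>Composition of CNCB: glue the base of D onto the i-th edge of C (1 <= i <= size C).\<close>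
definition cncb_comp :: "bnc \<Rightarrow> nat \<Rightarrow> bnc \<Rightarrow> bnc" where
  "cncb_comp C i D =
     (let n = bsize C; m = bsize D;
          \<sigma> = (\<lambda>v. if v \<le> i then v else v + m - 1);
          mapC = (\<lambda>S. (\<lambda>(a,b). (\<sigma> a, \<sigma> b)) ` S);
          mapD = (\<lambda>S. (\<lambda>(a,b). (a + i - 1, b + i - 1)) ` S);
          e = (i, i + m);
          edge_unc = ((i, i+1) \<notin> blue C \<union> red C);
          edge_blue = ((i, i+1) \<in> blue C);
          base_unc = ((1, m+1) \<notin> blue D \<union> red D);
          base_blue = ((1, m+1) \<in> blue D);
          B' = ((mapC (blue C) \<union> mapD (blue D)) - {e}) \<union> (if edge_blue \<and> base_blue then {e} else {});
          R' = ((mapC (red C) \<union> mapD (red D)) - {e}) \<union> (if edge_unc \<and> base_unc then {e} else {})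
      in (n + m - 1, B', R'))"

definition is_bubble :: "bnc \<Rightarrow> bool" where
  "is_bubble c = (is_bnc c \<and> bsize c \<ge> 2 \<and> (\<forall>a \<in> blue c \<union> red c. \<not> is_diagonal (bsize c) a))"

definition out_colour :: "bnc \<Rightarrow> nat" where
  "out_colour c = (if (1, bsize c + 1) \<in> blue c then 1 else 2)"

definition in_colour :: "bnc \<Rightarrow> nat \<Rightarrow> nat" where
  "in_colour c i = (if (i, i + 1) \<in> blue c then 2 else 1)"

definition bulle_defined :: "bnc \<Rightarrow> nat \<Rightarrow> bnc \<Rightarrow> bool" where
  "bulle_defined x i y = (is_bubble x \<and> is_bubble y \<and> 1 \<le> i \<and> i \<le> bsize x \<and>
                          out_colour y = in_colour x i)"

datatype 'g tree = Leaf | Node 'g "'g tree list"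

fun nleaves :: "'g tree \<Rightarrow> nat" and nleaves_list :: "'g tree list \<Rightarrow> nat" where
  "nleaves Leaf = 1"
| "nleaves (Node g ts) = nleaves_list ts"
| "nleaves_list [] = 0"
| "nleaves_list (t # ts) = nleaves t + nleaves_list ts"

fun wf_tree :: "'g set \<Rightarrow> ('g \<Rightarrow> nat) \<Rightarrow> 'g tree \<Rightarrow> bool"
  and wf_list :: "'g set \<Rightarrow> ('g \<Rightarrow> nat) \<Rightarrow> 'g tree list \<Rightarrow> bool" where
  "wf_tree G ar Leaf = True"
| "wf_tree G ar (Node g ts) = (g \<in> G \<and> length ts = ar g \<and> wf_list G ar ts)"
| "wf_list G ar [] = True"
| "wf_list G ar (t # ts) = (wf_tree G ar t \<and> wf_list G ar ts)"

text \<open>Partial composition in the free operad: graft s onto the i-th leaf (1-based) of t.\<close>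
fun graft :: "'g tree \<Rightarrow> nat \<Rightarrow> 'g tree \<Rightarrow> 'g tree"
  and graft_list :: "'g tree list \<Rightarrow> nat \<Rightarrow> 'g tree \<Rightarrow> 'g tree list" where
  "graft Leaf i s = (if i = 1 then s else Leaf)"
| "graft (Node g ts) i s = Node g (graft_list ts i s)"
| "graft_list [] i s = []"
| "graft_list (t # ts) i s =
     (if i \<le> nleaves t then graft t i s # ts else t # graft_list ts (i - nleaves t) s)"

definition corolla :: "('g \<Rightarrow> nat) \<Rightarrow> 'g \<Rightarrow> 'g tree" where
  "corolla ar g = Node g (replicate (ar g) Leaf)"

text \<open>Generators: Bulle^+ = bubbles (colours forgotten), arity = size.\<close>
abbreviation wf_env :: "bnc tree \<Rightarrow> bool" where
  "wf_env \<equiv> wf_tree {c. is_bubble c} bsize"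

inductive env_eq :: "bnc tree \<Rightarrow> bnc tree \<Rightarrow> bool" where
  gen: "bulle_defined x i y \<Longrightarrow>
        env_eq (graft (corolla bsize x) i (corolla bsize y)) (corolla bsize (cncb_comp x i y))"
| refl: "wf_env t \<Longrightarrow> env_eq t t"
| sym: "env_eq t s \<Longrightarrow> env_eq s t"
| trans: "env_eq t s \<Longrightarrow> env_eq s u \<Longrightarrow> env_eq t u"
| comp: "env_eq t t' \<Longrightarrow> env_eq s s' \<Longrightarrow> 1 \<le> i \<Longrightarrow> i \<le> nleaves t \<Longrightarrow>
         env_eq (graft t i s) (graft t' i s')"

end

theory Submission
  imports Defs
begin

abbreviation BUB :: "bnc set" where "BUB \<equiv> {c. is_bubble c}"

lemma nl_pos:
  "wf_tree BUB bsize t \<Longrightarrow> 1 \<le> nleaves t" "wf_list BUB bsize ts \<Longrightarrow> length ts \<le> nleaves_list ts"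
  by (induction t and ts rule: nleaves_nleaves_list.induct) (auto simp: is_bubble_def)

lemma nl_node: "wf_env (Node g ts) \<Longrightarrow> 2 \<le> nleaves (Node g ts)"
proof -
  assume a: "wf_env (Node g ts)"
  then have "length ts = bsize g" "bsize g \<ge> 2" "wf_list BUB bsize ts" by (auto simp: is_bubble_def)
  then show ?thesis using nl_pos(2)[of ts] by simp
qed

lemma graft_props:
  "\<And>i. 1 \<le> i \<Longrightarrow> i \<le> nleaves t \<Longrightarrow> nleaves (graft t i s) = nleaves t + nleaves s - 1 \<and>
      (wf_env t \<longrightarrow> wf_env s \<longrightarrow> wf_env (graft t i s))"
  "\<And>i. 1 \<le> i \<Longrightarrow> i \<le> nleaves_list ts \<Longrightarrow> nleaves_list (graft_list ts i s) = nleaves_list ts + nleaves s - 1 \<and>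
      length (graft_list ts i s) = length ts \<and>
      (wf_list BUB bsize ts \<longrightarrow> wf_env s \<longrightarrow> wf_list BUB bsize (graft_list ts i s))"
proof (induction t and ts rule: nleaves_nleaves_list.induct)
  case (4 t ts i)
  show ?case
  proof (cases "i \<le> nleaves t")
    case True then show ?thesis using 4 by auto
  next
    case False
    then have "1 \<le> i - nleaves t" "i - nleaves t \<le> nleaves_list ts" using 4 by auto
    then show ?thesis using 4 False by auto
  qed
qed auto

lemma nleaves_graft: "1 \<le> i \<Longrightarrow> i \<le> nleaves (t::bnc tree) \<Longrightarrow> nleaves (graft t i s) = nleaves t + nleaves s - 1"
  using graft_props(1)[of i t s] by simp
lemma wf_graft: "1 \<le> i \<Longrightarrow> i \<le> nleaves t \<Longrightarrow> wf_env t \<Longrightarrow> wf_env s \<Longrightarrow> wf_env (graft t i s)"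
  using graft_props(1)[of i t s] by simp



datatype ctx = Root | Unc | Blu

definition ectx :: "bnc \<Rightarrow> nat \<Rightarrow> ctx" where
  "ectx g j = (if (j, j+1) \<in> blue g then Blu else Unc)"
definition bblue :: "bnc \<Rightarrow> bool" where "bblue g = ((1, bsize g + 1) \<in> blue g)"

fun topB :: "ctx \<Rightarrow> nat \<Rightarrow> bnc tree \<Rightarrow> arc set" where
  "topB c p Leaf = (if c = Unc then {} else {(p, p+1)})"
| "topB c p (Node g ts) = (if c \<noteq> Unc \<and> bblue g then {(p, p + nleaves_list ts)} else {})"

fun topR :: "ctx \<Rightarrow> nat \<Rightarrow> bnc tree \<Rightarrow> arc set" where
  "topR c p Leaf = {}"
| "topR c p (Node g ts) = (if c = Unc \<and> \<not> bblue g then {(p, p + nleaves_list ts)} else {})"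

fun inB :: "nat \<Rightarrow> bnc tree \<Rightarrow> arc set" and inBl :: "bnc \<Rightarrow> nat \<Rightarrow> nat \<Rightarrow> bnc tree list \<Rightarrow> arc set" where
  "inB p Leaf = {}"
| "inB p (Node g ts) = inBl g 1 p ts"
| "inBl g j p [] = {}"
| "inBl g j p (t # ts) = topB (ectx g j) p t \<union> inB p t \<union> inBl g (Suc j) (p + nleaves t) ts"

fun inR :: "nat \<Rightarrow> bnc tree \<Rightarrow> arc set" and inRl :: "bnc \<Rightarrow> nat \<Rightarrow> nat \<Rightarrow> bnc tree list \<Rightarrow> arc set" where
  "inR p Leaf = {}"
| "inR p (Node g ts) = inRl g 1 p ts"
| "inRl g j p [] = {}"
| "inRl g j p (t # ts) = topR (ectx g j) p t \<union> inR p t \<union> inRl g (Suc j) (p + nleaves t) ts"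

fun lc :: "ctx \<Rightarrow> bnc tree \<Rightarrow> nat \<Rightarrow> ctx" and lcl :: "bnc \<Rightarrow> nat \<Rightarrow> bnc tree list \<Rightarrow> nat \<Rightarrow> ctx" where
  "lc c Leaf i = c"
| "lc c (Node g ts) i = lcl g 1 ts i"
| "lcl g j [] i = Unc"
| "lcl g j (t # ts) i = (if i \<le> nleaves t then lc (ectx g j) t i else lcl g (Suc j) ts (i - nleaves t))"

definition sh :: "nat \<Rightarrow> arc set \<Rightarrow> arc set" where
  "sh d X = (\<lambda>(a,b). (a + d, b + d)) ` X"

definition F :: "bnc tree \<Rightarrow> bnc" where
  "F t = (nleaves t, topB Root 1 t \<union> inB 1 t, inR 1 t)"

lemma sh_simps: "sh d {} = {}" "sh d {x} = {(fst x + d, snd x + d)}" "sh d (X \<union> Y) = sh d X \<union> sh d Y"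
  by (auto simp: sh_def split: prod.splits)

lemma sh_add: "sh d (sh e X) = sh (e + d) X"
  by (auto simp: sh_def image_image add.assoc intro!: image_cong)

lemma top_shift: "topB c (p + d) t = sh d (topB c p t)" "topR c (p + d) t = sh d (topR c p t)"
  by (cases t; simp add: sh_simps)+

lemma in_shift:
  "\<And>p. inB (p + d) t = sh d (inB p t)" "\<And>p j. inBl g j (p + d) ts = sh d (inBl g j p ts)"
  by (induction t and ts arbitrary: g and g rule: nleaves_nleaves_list.induct)
     (simp_all add: sh_simps top_shift, metis (no_types) add.commute[of d] add.assoc)

lemma inR_shift:
  "\<And>p. inR (p + d) t = sh d (inR p t)" "\<And>p j. inRl g j (p + d) ts = sh d (inRl g j p ts)"
  by (induction t and ts arbitrary: g and g rule: nleaves_nleaves_list.induct)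
     (simp_all add: sh_simps top_shift, metis (no_types) add.commute[of d] add.assoc)



lemma top_sub: "topB c p t \<subseteq> {(p, p + nleaves t)}" "topR c p t \<subseteq> {(p, p + nleaves t)}"
  by (cases t; auto)+

lemma nl_list_pos: "wf_list BUB bsize ts \<Longrightarrow> ts \<noteq> [] \<Longrightarrow> 1 \<le> nleaves_list ts"
  using nl_pos(2)[of ts] by (cases ts) auto

lemma range:
  "\<And>p. wf_env t \<Longrightarrow> x \<in> inB p t \<union> inR p t \<Longrightarrow>
     p \<le> fst x \<and> fst x < snd x \<and> snd x \<le> p + nleaves t \<and> snd x - fst x < nleaves t"
  "\<And>p j. wf_list BUB bsize ts \<Longrightarrow> x \<in> inBl g j p ts \<union> inRl g j p ts \<Longrightarrow>
     p \<le> fst x \<and> fst x < snd x \<and> snd x \<le> p + nleaves_list ts \<and> (snd x - fst x < nleaves_list ts \<or> length ts \<le> 1)"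
proof (induction t and ts arbitrary: g and g rule: nleaves_nleaves_list.induct)
  case (2 h ts p)
  then have "length ts \<ge> 2" "wf_list BUB bsize ts" by (auto simp: is_bubble_def)
  with 2 show ?case by fastforce
next
  case (4 t ts p j)
  have wt: "wf_env t" and wts: "wf_list BUB bsize ts" using 4 by auto
  have nt: "1 \<le> nleaves t" using nl_pos(1)[OF wt] .
  consider (top) "x \<in> topB (ectx g j) p t \<union> topR (ectx g j) p t" | (inn) "x \<in> inB p t \<union> inR p t"
    | (rest) "x \<in> inBl g (Suc j) (p + nleaves t) ts \<union> inRl g (Suc j) (p + nleaves t) ts"
    using 4(4) by auto
  then show ?case
  proof cases
    case top
    then have "x = (p, p + nleaves t)" using top_sub by blast
    then show ?thesis using nt nl_list_pos[OF wts] by (cases ts) auto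
  next
    case inn
    from 4(1)[OF wt inn] show ?thesis using nl_list_pos[OF wts] by (cases ts) auto
  next
    case rest
    from 4(2)[OF wts rest] show ?thesis using nt nl_list_pos[OF wts] by (cases ts) auto
  qed
qed auto

lemma red_long:
  "\<And>p. wf_env t \<Longrightarrow> x \<in> inR p t \<Longrightarrow> fst x + 2 \<le> snd x"
  "\<And>p j. wf_list BUB bsize ts \<Longrightarrow> x \<in> inRl g j p ts \<Longrightarrow> fst x + 2 \<le> snd x"
proof (induction t and ts arbitrary: g and g rule: nleaves_nleaves_list.induct)
  case (4 t ts p j)
  have wt: "wf_env t" and wts: "wf_list BUB bsize ts" using 4 by auto
  show ?case
  proof (cases "x \<in> topR (ectx g j) p t")
    case True
    then obtain h us where "t = Node h us" "x = (p, p + nleaves t)" by (cases t) (auto split: if_splits)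
    then show ?thesis using nl_node[of h us] wt by simp
  next
    case False
    then have "x \<in> inR p t \<or> x \<in> inRl g (Suc j) (p + nleaves t) ts" using 4(4) by simp
    then show ?thesis
    proof
      assume "x \<in> inR p t" then show ?thesis using 4(1)[OF wt] by blast
    next
      assume "x \<in> inRl g (Suc j) (p + nleaves t) ts" then show ?thesis using 4(2)[OF wts] by blast
    qed
  qed
qed auto



lemma sep: "fst x < snd x \<Longrightarrow> snd x \<le> m \<Longrightarrow> m \<le> fst y \<Longrightarrow> fst y < snd y \<Longrightarrow>
   \<not> crossing x y \<and> \<not> crossing y x \<and> x \<noteq> y"
  by (cases x; cases y) (auto simp: crossing_def)

lemma inside: "fst y \<le> fst x \<Longrightarrow> snd x \<le> snd y \<Longrightarrow> \<not> crossing x y \<and> \<not> crossing y x"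
  by (cases x; cases y) (auto simp: crossing_def)

lemma topBR_disj: "topB c p t \<inter> topR c p t = {}"
  by (cases t) auto

lemma disj:
  "\<And>p. wf_env t \<Longrightarrow> inB p t \<inter> inR p t = {}"
  "\<And>p j. wf_list BUB bsize ts \<Longrightarrow> inBl g j p ts \<inter> inRl g j p ts = {}"
proof (induction t and ts arbitrary: g and g rule: nleaves_nleaves_list.induct)
  case (2 h ts p)
  then show ?case by auto
next
  case (4 t ts p j)
  have wt: "wf_env t" and wts: "wf_list BUB bsize ts" using 4 by auto
  let ?A = "topB (ectx g j) p t \<union> inB p t"
  let ?B = "topR (ectx g j) p t \<union> inR p t"
  let ?C = "inBl g (Suc j) (p + nleaves t) ts"
  let ?D = "inRl g (Suc j) (p + nleaves t) ts"
  have nt: "1 \<le> nleaves t" using nl_pos(1)[OF wt] .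
  have r1: "\<And>x. x \<in> ?A \<union> ?B \<Longrightarrow> p \<le> fst x \<and> fst x < snd x \<and> snd x \<le> p + nleaves t"
    using range(1)[OF wt] top_sub nt by fastforce
  have r2: "\<And>x. x \<in> ?C \<union> ?D \<Longrightarrow> p + nleaves t \<le> fst x \<and> fst x < snd x"
    using range(2)[OF wts] by blast
  have "?A \<inter> ?B = {}"
  proof -
    have "topB (ectx g j) p t \<inter> inR p t = {}" "topR (ectx g j) p t \<inter> inB p t = {}"
      using range(1)[OF wt] top_sub by fastforce+
    then show ?thesis using topBR_disj 4(1)[OF wt] by blast
  qed
  moreover have "(?A \<union> ?B) \<inter> (?C \<union> ?D) = {}"
    using r1 r2 by fastforce
  moreover have "?C \<inter> ?D = {}" using 4(2)[OF wts] .
  ultimately show ?case by auto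
qed auto

lemma noncross:
  "\<And>p. wf_env t \<Longrightarrow> x \<in> insert (p, p + nleaves t) (inB p t \<union> inR p t) \<Longrightarrow>
      y \<in> insert (p, p + nleaves t) (inB p t \<union> inR p t) \<Longrightarrow> \<not> crossing x y"
  "\<And>p j. wf_list BUB bsize ts \<Longrightarrow> x \<in> inBl g j p ts \<union> inRl g j p ts \<Longrightarrow>
      y \<in> inBl g j p ts \<union> inRl g j p ts \<Longrightarrow> \<not> crossing x y"
proof (induction t and ts arbitrary: g x y and g x y rule: nleaves_nleaves_list.induct)
  case 1 then show ?case by (auto simp: crossing_def)
next
  case (2 h ts p)
  then have wts: "wf_list BUB bsize ts" by auto
  have in_r: "\<And>z. z \<in> inBl h 1 p ts \<union> inRl h 1 p ts \<Longrightarrow> p \<le> fst z \<and> snd z \<le> p + nleaves_list ts"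
    using range(2)[OF wts] by blast
  show ?case
  proof (cases "x = (p, p + nleaves (Node h ts))")
    case xT: True
    show ?thesis
    proof (cases "y = (p, p + nleaves (Node h ts))")
      case True then show ?thesis using xT by (simp add: crossing_def)
    next
      case False
      then have "y \<in> inBl h 1 p ts \<union> inRl h 1 p ts" using 2(4) by auto
      then show ?thesis using in_r[of y] xT by (cases y) (auto simp: crossing_def)
    qed
  next
    case False
    show ?thesis
    proof (cases "y = (p, p + nleaves (Node h ts))")
      case True
      then show ?thesis using 2(3) False in_r[of x] by (cases x) (auto simp: crossing_def)
    next
      case False
      then show ?thesis using 2 \<open>x \<noteq> _\<close> wts by auto
    qed
  qed
next
  case (4 t ts p j)
  have wt: "wf_env t" and wts: "wf_list BUB bsize ts" using 4 by auto
  let ?T = "insert (p, p + nleaves t) (inB p t \<union> inR p t)"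
  let ?R = "inBl g (Suc j) (p + nleaves t) ts \<union> inRl g (Suc j) (p + nleaves t) ts"
  have nt: "1 \<le> nleaves t" using nl_pos(1)[OF wt] .
  have sub: "topB (ectx g j) p t \<union> topR (ectx g j) p t \<subseteq> {(p, p + nleaves t)}" using top_sub by blast
  have xs: "x \<in> ?T \<union> ?R" "y \<in> ?T \<union> ?R" using 4(4,5) sub by auto
  have r1: "\<And>x. x \<in> ?T \<Longrightarrow> fst x < snd x \<and> snd x \<le> p + nleaves t"
    using range(1)[OF wt] nt by fastforce
  have r2: "\<And>x. x \<in> ?R \<Longrightarrow> p + nleaves t \<le> fst x \<and> fst x < snd x"
    using range(2)[OF wts] by blast
  show ?case
  proof (cases "x \<in> ?T")
    case xT: True
    show ?thesis
    proof (cases "y \<in> ?T")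
      case True then show ?thesis using 4(1)[OF wt xT] by blast
    next
      case False then have "y \<in> ?R" using xs by blast
      then show ?thesis using sep[of x "p + nleaves t" y] r1[OF xT] r2 by blast
    qed
  next
    case xR0: False
    then have xR: "x \<in> ?R" using xs by blast
    show ?thesis
    proof (cases "y \<in> ?T")
      case True then show ?thesis using sep[of y "p + nleaves t" x] r1 r2[OF xR] by blast
    next
      case False then have "y \<in> ?R" using xs by blast
      then show ?thesis using 4(2)[OF wts xR] by blast
    qed
  qed
qed auto

lemma F_Leaf: "F Leaf = bnc_unit"
  by (simp add: F_def bnc_unit_def)

lemma F_size: "bsize (F t) = nleaves t" by (simp add: F_def bsize_def)

lemma F_bnc: "wf_env t \<Longrightarrow> is_bnc (F t)"
proof (cases t)
  case Leaf then show ?thesis by (simp add: F_Leaf is_bnc_def)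
next
  case (Node h ts)
  assume wt: "wf_env t"
  let ?N = "nleaves t"
  have N2: "2 \<le> ?N" using nl_node wt Node by blast
  have tb: "topB Root 1 t \<subseteq> {(1, 1 + ?N)}" using top_sub by blast
  have rg: "\<And>x. x \<in> inB 1 t \<union> inR 1 t \<Longrightarrow> 1 \<le> fst x \<and> fst x < snd x \<and> snd x \<le> 1 + ?N \<and> snd x - fst x < ?N"
    using range(1)[OF wt] by blast
  have B: "blue (F t) = topB Root 1 t \<union> inB 1 t" and R: "red (F t) = inR 1 t" and S: "bsize (F t) = ?N"
    by (simp_all add: F_def blue_def red_def bsize_def)
  have "blue (F t) \<union> red (F t) \<subseteq> arcs ?N"
    using tb rg N2 unfolding B R arcs_def by fastforce
  moreover have "blue (F t) \<inter> red (F t) = {}"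
  proof -
    have "topB Root 1 t \<inter> inR 1 t = {}" using tb rg by fastforce
    then show ?thesis using disj(1)[OF wt] unfolding B R by blast
  qed
  moreover have "\<forall>a\<in>blue (F t) \<union> red (F t). \<forall>b\<in>blue (F t) \<union> red (F t). \<not> crossing a b"
  proof (intro ballI)
    fix a b assume "a \<in> blue (F t) \<union> red (F t)" "b \<in> blue (F t) \<union> red (F t)"
    then have "a \<in> insert (1, 1 + ?N) (inB 1 t \<union> inR 1 t)" "b \<in> insert (1, 1 + ?N) (inB 1 t \<union> inR 1 t)"
      using tb unfolding B R by auto
    then show "\<not> crossing a b" using noncross(1)[OF wt] by blast
  qed
  moreover have "\<forall>a\<in>red (F t). is_diagonal ?N a"
  proof
    fix a assume "a \<in> red (F t)"
    then have "a \<in> inR 1 t" unfolding R .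
    then have "1 \<le> fst a" "fst a + 2 \<le> snd a" "snd a \<le> 1 + ?N" "snd a - fst a < ?N"
      using rg red_long(1)[OF wt] by auto
    then show "is_diagonal ?N a" by (cases a) (auto simp: is_diagonal_def arcs_def)
  qed
  ultimately show ?thesis using N2 unfolding is_bnc_def S Let_def by auto
qed



abbreviation bl :: "ctx \<Rightarrow> nat \<Rightarrow> bnc tree \<Rightarrow> arc set" where "bl c p t \<equiv> topB c p t \<union> inB p t"
abbreviation rd :: "ctx \<Rightarrow> nat \<Rightarrow> bnc tree \<Rightarrow> arc set" where "rd c p t \<equiv> topR c p t \<union> inR p t"

definition sg :: "nat \<Rightarrow> nat \<Rightarrow> nat \<Rightarrow> nat" where "sg q m v = (if v \<le> q then v else v + m - 1)"
definition smap :: "nat \<Rightarrow> nat \<Rightarrow> arc set \<Rightarrow> arc set" where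
  "smap q m X = (\<lambda>(a,b). (sg q m a, sg q m b)) ` X"

lemma smap_un: "smap q m (X \<union> Y) = smap q m X \<union> smap q m Y"
  by (auto simp: smap_def)

lemma smap_id: "\<forall>x\<in>X. fst x < snd x \<and> snd x \<le> q \<Longrightarrow> smap q m X = X"
  unfolding smap_def sg_def by (force intro: rev_image_eqI)

lemma smap_sh: "1 \<le> m \<Longrightarrow> \<forall>x\<in>X. q < fst x \<and> fst x < snd x \<Longrightarrow> smap q m X = sh (m - 1) X"
  unfolding smap_def sg_def sh_def by (force intro!: image_cong)

lemma rng_tree: "wf_env t \<Longrightarrow> x \<in> bl c p t \<union> rd c p t \<Longrightarrow> p \<le> fst x \<and> fst x < snd x \<and> snd x \<le> p + nleaves t"
  using range(1)[of t x p] top_sub[of c p t] nl_pos(1)[of t] by fastforce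

lemma rng_list: "wf_list BUB bsize ts \<Longrightarrow> x \<in> inBl g j p ts \<union> inRl g j p ts \<Longrightarrow> p \<le> fst x \<and> fst x < snd x \<and> snd x \<le> p + nleaves_list ts"
  using range(2) by blast

lemma morph:
  "\<And>c p. wf_env t \<Longrightarrow> wf_env s \<Longrightarrow> 1 \<le> i \<Longrightarrow> i \<le> nleaves t \<Longrightarrow>
     bl c p (graft t i s) = smap (p + i - 1) (nleaves s) (bl c p t - {(p + i - 1, p + i)}) \<union> bl (lc c t i) (p + i - 1) s \<and>
     rd c p (graft t i s) = smap (p + i - 1) (nleaves s) (rd c p t) \<union> rd (lc c t i) (p + i - 1) s"
  "\<And>g j p. wf_list BUB bsize ts \<Longrightarrow> wf_env s \<Longrightarrow> 1 \<le> i \<Longrightarrow> i \<le> nleaves_list ts \<Longrightarrow>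
     inBl g j p (graft_list ts i s) = smap (p + i - 1) (nleaves s) (inBl g j p ts - {(p + i - 1, p + i)}) \<union> bl (lcl g j ts i) (p + i - 1) s \<and>
     inRl g j p (graft_list ts i s) = smap (p + i - 1) (nleaves s) (inRl g j p ts) \<union> rd (lcl g j ts i) (p + i - 1) s"
proof (induction t i s and ts i s rule: graft_graft_list.induct)
  case (1 i s c p)
  then have "i = 1" by simp
  then show ?case by (simp add: smap_def)
next
  case (2 g ts i s c p)
  let ?q = "p + i - 1" and ?m = "nleaves s"
  have wts: "wf_list BUB bsize ts" using 2 by simp
  have N2: "2 \<le> nleaves_list ts" using nl_node[of g ts] 2 by simp
  have m1: "1 \<le> ?m" using nl_pos(1) 2 by blast
  have NL: "nleaves_list (graft_list ts i s) = nleaves_list ts + ?m - 1"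
    using graft_props(2)[of i ts s] 2 by simp
  have IH: "inBl g 1 p (graft_list ts i s) = smap ?q ?m (inBl g 1 p ts - {(?q, ?q + 1)}) \<union> bl (lcl g 1 ts i) ?q s \<and>
     inRl g 1 p (graft_list ts i s) = smap ?q ?m (inRl g 1 p ts) \<union> rd (lcl g 1 ts i) ?q s"
    using 2 wts by (simp add: add.commute)
  have sgp: "sg ?q ?m p = p" "sg ?q ?m (p + nleaves_list ts) = p + nleaves_list ts + ?m - 1"
    using 2 m1 by (auto simp: sg_def)
  have tB: "topB c p (Node g (graft_list ts i s)) = smap ?q ?m (topB c p (Node g ts) - {(?q, ?q + 1)})"
    using sgp NL N2 2(5) by (auto simp: smap_def)
  have tR: "topR c p (Node g (graft_list ts i s)) = smap ?q ?m (topR c p (Node g ts))"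
    using sgp NL m1 by (auto simp: smap_def)
  have e: "(A \<union> B) - {z} = (A - {z}) \<union> (B - {z})" for A B :: "arc set" and z by blast
  have qq: "Suc (i + p - Suc 0) = i + p" using 2(4) by simp
  show ?case using IH tB tR 2(5) by (simp add: smap_un e Un_assoc add.commute qq)
next
  case (3 i s g j p) then show ?case by simp
next
  case (4 t ts i s g j p)
  let ?q = "p + i - 1" and ?m = "nleaves s" and ?nt = "nleaves t"
  have wt: "wf_env t" and wts: "wf_list BUB bsize ts" using 4 by auto
  have m1: "1 \<le> ?m" using nl_pos(1) 4 by blast
  have nt1: "1 \<le> ?nt" using nl_pos(1) wt by blast
  have e: "(A \<union> B) - {z} = (A - {z}) \<union> (B - {z})" for A B :: "arc set" and z by blast
  have qq0: "Suc (i + p - Suc 0) = i + p" using 4(5) by simp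
  show ?case
  proof (cases "i \<le> ?nt")
    case True
    have IH: "bl (ectx g j) p (graft t i s) = smap ?q ?m (bl (ectx g j) p t - {(?q, ?q + 1)}) \<union> bl (lc (ectx g j) t i) ?q s \<and>
     rd (ectx g j) p (graft t i s) = smap ?q ?m (rd (ectx g j) p t) \<union> rd (lc (ectx g j) t i) ?q s"
      using 4(1)[OF True wt 4(4) 4(5) True] by (simp add: add.commute qq0)
    have NG: "nleaves (graft t i s) = ?nt + ?m - 1" using nleaves_graft[of i t s] 4 True by simp
    have RB: "\<forall>x\<in>inBl g (Suc j) (p + ?nt) ts. ?q < fst x \<and> fst x < snd x"
      "\<forall>x\<in>inRl g (Suc j) (p + ?nt) ts. ?q < fst x \<and> fst x < snd x"
      using rng_list[OF wts] True 4(5) by fastforce+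
    have pp: "p + nleaves (graft t i s) = (p + ?nt) + (?m - 1)" using NG m1 nt1 by simp
    have shB: "inBl g (Suc j) (p + nleaves (graft t i s)) ts = smap ?q ?m (inBl g (Suc j) (p + ?nt) ts - {(?q, p + i)})"
    proof -
      have "inBl g (Suc j) (p + ?nt) ts - {(?q, p + i)} = inBl g (Suc j) (p + ?nt) ts" using RB by auto
      then show ?thesis unfolding pp using smap_sh[OF m1 RB(1)] in_shift(2)[of g "Suc j" "p + ?nt" "?m - 1" ts] by simp
    qed
    have shR: "inRl g (Suc j) (p + nleaves (graft t i s)) ts = smap ?q ?m (inRl g (Suc j) (p + ?nt) ts)"
      unfolding pp using smap_sh[OF m1 RB(2)] inR_shift(2)[of g "Suc j" "p + ?nt" "?m - 1" ts] by simp
    show ?thesis using IH True shB shR by (simp add: smap_un e ac_simps qq0)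
  next
    case False
    have i1: "1 \<le> i - ?nt" "i - ?nt \<le> nleaves_list ts" using False 4(6) by auto
    have qq: "p + ?nt + (i - ?nt) - 1 = ?q" "p + ?nt + (i - ?nt) = p + i" using False by auto
    have IH: "inBl g (Suc j) (p + ?nt) (graft_list ts (i - ?nt) s) = smap ?q ?m (inBl g (Suc j) (p + ?nt) ts - {(?q, ?q + 1)}) \<union> bl (lcl g (Suc j) ts (i - ?nt)) ?q s \<and>
      inRl g (Suc j) (p + ?nt) (graft_list ts (i - ?nt) s) = smap ?q ?m (inRl g (Suc j) (p + ?nt) ts) \<union> rd (lcl g (Suc j) ts (i - ?nt)) ?q s"
      using 4(2)[OF False wts 4(4) i1, of g "Suc j" "p + ?nt"] qq by (simp add: add.commute qq0)
    have RT: "\<forall>x\<in>bl (ectx g j) p t. fst x < snd x \<and> snd x \<le> ?q" "\<forall>x\<in>rd (ectx g j) p t. fst x < snd x \<and> snd x \<le> ?q"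
      using rng_tree[OF wt] False by fastforce+
    have "(?q, p + i) \<notin> bl (ectx g j) p t"
    proof
      assume "(?q, p + i) \<in> bl (ectx g j) p t"
      from bspec[OF RT(1) this] have "p + i \<le> ?q" by simp
      then show False using 4(5) by simp
    qed
    then have t1: "bl (ectx g j) p t - {(?q, p + i)} = bl (ectx g j) p t" by blast
    have i1: "smap ?q ?m (topB (ectx g j) p t) = topB (ectx g j) p t" "smap ?q ?m (inB p t) = inB p t"
      "smap ?q ?m (topR (ectx g j) p t) = topR (ectx g j) p t" "smap ?q ?m (inR p t) = inR p t"
      by (rule smap_id; use RT in blast)+
    have t2: "topB (ectx g j) p t - {(?q, p + i)} = topB (ectx g j) p t" "inB p t - {(?q, p + i)} = inB p t"
      using t1 by blast+
    show ?thesis using IH False i1 t2 by (simp add: smap_un e ac_simps qq0)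
  qed
qed



lemma lc_mem:
  "\<And>p. wf_env t \<Longrightarrow> 1 \<le> i \<Longrightarrow> i \<le> nleaves t \<Longrightarrow> ((p + i - 1, p + i) \<in> bl c p t \<longleftrightarrow> lc c t i \<noteq> Unc)"
  "\<And>p. wf_list BUB bsize ts \<Longrightarrow> 1 \<le> i \<Longrightarrow> i \<le> nleaves_list ts \<Longrightarrow> ((p + i - 1, p + i) \<in> inBl g j p ts \<longleftrightarrow> lcl g j ts i \<noteq> Unc)"
proof (induction c t i and g j ts i rule: lc_lcl.induct)
  case (1 c i p) then show ?case by auto
next
  case (2 c g ts i p)
  have N2: "2 \<le> nleaves_list ts" using nl_node[of g ts] 2 by simp
  have "(p + i - 1, p + i) \<notin> topB c p (Node g ts)" using N2 2 by auto
  then show ?case using 2 by simp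
next
  case (3 g j i p) then show ?case by simp
next
  case (4 g j t ts i p)
  have wt: "wf_env t" and wts: "wf_list BUB bsize ts" using 4 by auto
  show ?case
  proof (cases "i \<le> nleaves t")
    case True
    have "(p + i - 1, p + i) \<notin> inBl g (Suc j) (p + nleaves t) ts"
      using rng_list[OF wts, of "(p + i - 1, p + i)" g "Suc j" "p + nleaves t"] True 4(5) by auto
    then show ?thesis using 4(1)[OF True wt 4(4) True] True by auto
  next
    case False
    have "(p + i - 1, p + i) \<notin> bl (ectx g j) p t"
      using rng_tree[OF wt, of "(p + i - 1, p + i)" "ectx g j" p] False by auto
    moreover have "p + nleaves t + (i - nleaves t) - 1 = p + i - 1" "p + nleaves t + (i - nleaves t) = p + i"
      using False by auto
    ultimately show ?thesis using 4(2)[OF False wts _ _, of "p + nleaves t"] False 4(5) by auto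
  qed
qed

lemma unit_not_red: "wf_env t \<Longrightarrow> (a, Suc a) \<notin> rd c p t"
proof
  assume wt: "wf_env t" and m: "(a, Suc a) \<in> rd c p t"
  show False
  proof (cases "(a, Suc a) \<in> inR p t")
    case True then show False using red_long(1)[OF wt True] by simp
  next
    case False
    then have "(a, Suc a) \<in> topR c p t" using m by blast
    then obtain h us where "t = Node h us" "(a, Suc a) = (p, p + nleaves t)" by (cases t) (auto split: if_splits)
    then show False using nl_node[of h us] wt by simp
  qed
qed

lemma topR_Root: "topR Root p t = {}" by (cases t) auto

lemma e_lemma: "fst x < snd x \<Longrightarrow> 1 \<le> m \<Longrightarrow> (sg i m (fst x), sg i m (snd x)) = (i, i + m) \<Longrightarrow> x = (i, i + 1)"
  by (cases x) (auto simp: sg_def split: if_splits)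

lemma top_s: "wf_env s \<Longrightarrow> topB c i s = (if c \<noteq> Unc \<and> (1, nleaves s + 1) \<in> bl Root 1 s then {(i, i + nleaves s)} else {})"
proof (cases s)
  case Leaf then show ?thesis by simp
next
  case (Node h us)
  assume ws: "wf_env s"
  have "(1, nleaves s + 1) \<notin> inB 1 s" using range(1)[OF ws, of "(1, nleaves s + 1)" 1] by auto
  then show ?thesis using Node by auto
qed

lemma topR_s: "wf_env s \<Longrightarrow> topR c i s = (if c = Unc \<and> (1, nleaves s + 1) \<notin> bl Root 1 s then {(i, i + nleaves s)} else {})"
proof (cases s)
  case Leaf then show ?thesis by simp
next
  case (Node h us)
  assume ws: "wf_env s"
  have "(1, nleaves s + 1) \<notin> inB 1 s" using range(1)[OF ws, of "(1, nleaves s + 1)" 1] by auto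
  then show ?thesis using Node by auto
qed

definition shf :: "nat \<Rightarrow> arc set \<Rightarrow> arc set" where
  "shf i X = (\<lambda>(a,b). (a + i - 1, b + i - 1)) ` X"

lemma cncb_alt: "cncb_comp C i D =
  (bsize C + bsize D - 1,
   ((smap i (bsize D) (blue C) \<union> shf i (blue D)) - {(i, i + bsize D)}) \<union>
     (if (i, i+1) \<in> blue C \<and> (1, bsize D + 1) \<in> blue D then {(i, i + bsize D)} else {}),
   ((smap i (bsize D) (red C) \<union> shf i (red D)) - {(i, i + bsize D)}) \<union>
     (if (i, i+1) \<notin> blue C \<union> red C \<and> (1, bsize D + 1) \<notin> blue D \<union> red D then {(i, i + bsize D)} else {}))"
  unfolding cncb_comp_def Let_def smap_def sg_def shf_def by simp



lemma F_graft:
  assumes wt: "wf_env t" and ws: "wf_env s" and i: "1 \<le> i" "i \<le> nleaves t"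
  shows "F (graft t i s) = cncb_comp (F t) i (F s)"
proof -
  let ?m = "nleaves s" and ?n = "nleaves t"
  let ?e = "(i, i + ?m)"
  let ?c = "lc Root t i"
  have m1: "1 \<le> ?m" using nl_pos(1)[OF ws] .
  have M: "bl Root 1 (graft t i s) = smap i ?m (bl Root 1 t - {(i, i + 1)}) \<union> bl ?c i s"
       "rd Root 1 (graft t i s) = smap i ?m (rd Root 1 t) \<union> rd ?c i s"
    using morph(1)[OF wt ws i, of Root 1] by auto
  have shD: "shf i = sh (i - 1)"
    using i by (auto simp: sh_def shf_def fun_eq_iff intro!: image_cong)
  have FB: "blue (F x) = bl Root 1 x" "red (F x) = inR 1 x" "bsize (F x) = nleaves x" for x
    by (simp_all add: F_def blue_def red_def bsize_def)
  have shB: "sh (i - 1) (bl Root 1 s) = bl Root i s" "sh (i - 1) (inR 1 s) = inR i s"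
    using top_shift(1)[of Root 1 "i - 1" s] in_shift(1)[of 1 "i - 1" s] inR_shift(1)[of 1 "i - 1" s] i
    by (simp_all add: sh_simps)
  have lcm: "(i, i + 1) \<in> bl Root 1 t \<longleftrightarrow> ?c \<noteq> Unc" using lc_mem(1)[OF wt i, of 1 Root] by simp
  have ired: "(i, i + 1) \<notin> inR 1 t" using unit_not_red[OF wt, of i Root 1] by simp
  have eIn: "?e \<notin> inB i s" "?e \<notin> inR i s" using range(1)[OF ws, of ?e i] by auto
  have rgT: "\<And>x. x \<in> bl Root 1 t \<union> rd Root 1 t \<Longrightarrow> fst x < snd x" using rng_tree[OF wt] by blast
  have eNot: "?e \<notin> smap i ?m (bl Root 1 t - {(i, i + 1)})" "?e \<notin> smap i ?m (inR 1 t)"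
  proof -
    show "?e \<notin> smap i ?m (bl Root 1 t - {(i, i + 1)})"
    proof
      assume "?e \<in> smap i ?m (bl Root 1 t - {(i, i + 1)})"
      then obtain x where x0: "x \<in> bl Root 1 t - {(i, i+1)}" "?e = (\<lambda>(a,b). (sg i ?m a, sg i ?m b)) x"
        unfolding smap_def by blast
      then have x: "x \<in> bl Root 1 t" "x \<noteq> (i, i+1)" "(sg i ?m (fst x), sg i ?m (snd x)) = ?e"
        by (cases x; auto)+
      then show False using e_lemma[of x ?m i] rgT m1 by blast
    qed
    show "?e \<notin> smap i ?m (inR 1 t)"
    proof
      assume "?e \<in> smap i ?m (inR 1 t)"
      then obtain x where x0: "x \<in> inR 1 t" "?e = (\<lambda>(a,b). (sg i ?m a, sg i ?m b)) x"
        unfolding smap_def by blast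
      then have x: "x \<in> inR 1 t" "(sg i ?m (fst x), sg i ?m (snd x)) = ?e"
        by (cases x; auto)+
      then show False using e_lemma[of x ?m i] rgT m1 ired by (metis UnCI topR_Root sup_bot.left_neutral)
    qed
  qed
  have smB: "smap i ?m (bl Root 1 t) = smap i ?m (bl Root 1 t - {(i, i + 1)}) \<union> (if ?c \<noteq> Unc then {?e} else {})"
  proof -
    have "bl Root 1 t = (bl Root 1 t - {(i, i + 1)}) \<union> (if ?c \<noteq> Unc then {(i, i+1)} else {})"
      using lcm by auto
    then have "smap i ?m (bl Root 1 t) = smap i ?m (bl Root 1 t - {(i, i + 1)}) \<union> smap i ?m (if ?c \<noteq> Unc then {(i, i+1)} else {})"
      by (metis smap_un)
    then show ?thesis using m1 by (auto simp: smap_def sg_def)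
  qed
  have topS: "topB ?c i s = (if ?c \<noteq> Unc \<and> (1, ?m + 1) \<in> bl Root 1 s then {?e} else {})"
    by (rule top_s[OF ws])
  have topRS: "topR ?c i s = (if ?c = Unc \<and> (1, ?m + 1) \<notin> bl Root 1 s then {?e} else {})"
    by (rule topR_s[OF ws])
  have blS: "bl Root i s - {?e} = inB i s"
  proof -
    have "topB Root i s \<subseteq> {?e}" using top_sub by blast
    then show ?thesis using eIn by blast
  qed
  have blue_eq: "blue (F (graft t i s)) = blue (cncb_comp (F t) i (F s))"
  proof -
    have "blue (cncb_comp (F t) i (F s)) =
       ((smap i ?m (bl Root 1 t) \<union> bl Root i s) - {?e}) \<union>
       (if (i, i + 1) \<in> bl Root 1 t \<and> (1, ?m + 1) \<in> bl Root 1 s then {?e} else {})"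
      unfolding cncb_alt FB shD shB by (simp add: blue_def)
    also have "\<dots> = smap i ?m (bl Root 1 t - {(i, i + 1)}) \<union> inB i s \<union> topB ?c i s"
    proof -
      have h0: "(smap i ?m (bl Root 1 t) \<union> bl Root i s) - {?e} =
          (smap i ?m (bl Root 1 t - {(i, i + 1)}) - {?e}) \<union> ((if ?c \<noteq> Unc then {?e} else {}) - {?e}) \<union> (bl Root i s - {?e})"
        unfolding smB by blast
      have h1: "(smap i ?m (bl Root 1 t) \<union> bl Root i s) - {?e} = smap i ?m (bl Root 1 t - {(i, i + 1)}) \<union> inB i s"
        unfolding h0 blS using eNot(1) by auto
      show ?thesis unfolding h1 topS lcm by simp
    qed
    also have "\<dots> = blue (F (graft t i s))" using M(1) FB by auto
    finally show ?thesis by simp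
  qed
  have red_eq: "red (F (graft t i s)) = red (cncb_comp (F t) i (F s))"
  proof -
    have nr: "(1, ?m + 1) \<notin> inR 1 s" using range(1)[OF ws, of "(1, ?m + 1)" 1] by auto
    have "red (cncb_comp (F t) i (F s)) =
       ((smap i ?m (inR 1 t) \<union> inR i s) - {?e}) \<union>
       (if (i, i + 1) \<notin> bl Root 1 t \<union> inR 1 t \<and> (1, ?m + 1) \<notin> bl Root 1 s \<union> inR 1 s then {?e} else {})"
      unfolding cncb_alt FB shD shB by (simp add: red_def)
    also have "\<dots> = smap i ?m (inR 1 t) \<union> inR i s \<union> topR ?c i s"
    proof -
      have h1: "(smap i ?m (inR 1 t) \<union> inR i s) - {?e} = smap i ?m (inR 1 t) \<union> inR i s"
        using eNot(2) eIn by auto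
      have h2: "((i, i + 1) \<notin> bl Root 1 t \<union> inR 1 t) = (?c = Unc)" using lcm ired by blast
      have h3: "((1, ?m + 1) \<notin> bl Root 1 s \<union> inR 1 s) = ((1, ?m + 1) \<notin> bl Root 1 s)" using nr by blast
      show ?thesis unfolding h1 h2 h3 topRS by simp
    qed
    also have "\<dots> = red (F (graft t i s))" using M(2) FB topR_Root by auto
    finally show ?thesis by simp
  qed
  have size_eq: "bsize (F (graft t i s)) = bsize (cncb_comp (F t) i (F s))"
    using nleaves_graft[OF i] by (simp add: F_def cncb_alt bsize_def)
  show ?thesis using blue_eq red_eq size_eq
    by (metis blue_def bsize_def red_def prod_eq_iff)
qed



lemma nl_rep: "nleaves_list (replicate k (Leaf :: bnc tree)) = k"
  by (induction k) auto

lemma inBl_rep: "inBl g j p (replicate k Leaf) = {(p + d, p + d + 1) | d. d < k \<and> (j + d, j + d + 1) \<in> blue g}"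
proof (induction k arbitrary: j p)
  case 0 then show ?case by simp
next
  case (Suc k)
  have "inBl g j p (replicate (Suc k) Leaf) = topB (ectx g j) p Leaf \<union> inBl g (Suc j) (Suc p) (replicate k Leaf)"
    by simp
  also have "\<dots> = (if (j, j+1) \<in> blue g then {(p, p+1)} else {}) \<union>
      {(Suc p + d, Suc p + d + 1) | d. d < k \<and> (Suc j + d, Suc j + d + 1) \<in> blue g}"
    using Suc by (simp add: ectx_def)
  also have "\<dots> = {(p + d, p + d + 1) | d. d < Suc k \<and> (j + d, j + d + 1) \<in> blue g}"
  proof (rule set_eqI, rule iffI)
    fix x assume "x \<in> (if (j, j+1) \<in> blue g then {(p, p+1)} else {}) \<union>
      {(Suc p + d, Suc p + d + 1) | d. d < k \<and> (Suc j + d, Suc j + d + 1) \<in> blue g}"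
    then show "x \<in> {(p + d, p + d + 1) | d. d < Suc k \<and> (j + d, j + d + 1) \<in> blue g}"
    proof (cases "x = (p, p+1) \<and> (j, j+1) \<in> blue g")
      case True then show ?thesis by (auto intro!: exI[of _ 0])
    next
      case False
      then obtain d where "x = (Suc p + d, Suc p + d + 1)" "d < k" "(Suc j + d, Suc j + d + 1) \<in> blue g"
        using \<open>x \<in> _\<close> by (auto split: if_splits)
      then show ?thesis by (auto intro!: exI[of _ "Suc d"])
    qed
  next
    fix x assume "x \<in> {(p + d, p + d + 1) | d. d < Suc k \<and> (j + d, j + d + 1) \<in> blue g}"
    then obtain d where d: "x = (p + d, p + d + 1)" "d < Suc k" "(j + d, j + d + 1) \<in> blue g" by blast
    show "x \<in> (if (j, j+1) \<in> blue g then {(p, p+1)} else {}) \<union>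
      {(Suc p + d, Suc p + d + 1) | d. d < k \<and> (Suc j + d, Suc j + d + 1) \<in> blue g}"
    proof (cases d)
      case 0 then show ?thesis using d by simp
    next
      case (Suc d') then show ?thesis using d by auto
    qed
  qed
  finally show ?case .
qed

lemma inRl_rep: "inRl g j p (replicate k Leaf) = {}"
  by (induction k arbitrary: j p) auto

lemma bubble_arcs:
  assumes "is_bubble x"
  shows "red x = {}" "blue x \<subseteq> {(a, a+1) | a. 1 \<le> a \<and> a \<le> bsize x} \<union> {(1, bsize x + 1)}"
proof -
  have b: "is_bnc x" "2 \<le> bsize x" "\<forall>a \<in> blue x \<union> red x. \<not> is_diagonal (bsize x) a"
    using assms by (auto simp: is_bubble_def)
  then have nu: "x \<noteq> bnc_unit" by (auto simp: bnc_unit_def bsize_def)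
  then have c: "blue x \<union> red x \<subseteq> arcs (bsize x)" "\<forall>a\<in>red x. is_diagonal (bsize x) a"
    using b(1) by (auto simp: is_bnc_def Let_def)
  show "red x = {}" using c(2) b(3) by blast
  show "blue x \<subseteq> {(a, a+1) | a. 1 \<le> a \<and> a \<le> bsize x} \<union> {(1, bsize x + 1)}"
  proof
    fix a assume "a \<in> blue x"
    then have "a \<in> arcs (bsize x)" "\<not> is_diagonal (bsize x) a" using c b(3) by auto
    then show "a \<in> {(a, a+1) | a. 1 \<le> a \<and> a \<le> bsize x} \<union> {(1, bsize x + 1)}"
      by (cases a) (auto simp: arcs_def is_diagonal_def)
  qed
qed

lemma F_corolla: assumes "is_bubble x" shows "F (corolla bsize x) = x"
proof -
  let ?n = "bsize x"
  have ba: "red x = {}" "blue x \<subseteq> {(a, a+1) | a. 1 \<le> a \<and> a \<le> ?n} \<union> {(1, ?n + 1)}"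
    using bubble_arcs[OF assms] by auto
  have n2: "2 \<le> ?n" using assms by (simp add: is_bubble_def)
  have B: "bl Root 1 (corolla bsize x) = blue x"
  proof -
    have "bl Root 1 (corolla bsize x) = (if bblue x then {(1, 1 + ?n)} else {}) \<union>
       {(1 + d, 1 + d + 1) | d. d < ?n \<and> (1 + d, 1 + d + 1) \<in> blue x}"
      by (simp add: corolla_def nl_rep inBl_rep)
    also have "\<dots> = blue x"
    proof (rule set_eqI, rule iffI)
      fix y assume "y \<in> (if bblue x then {(1, 1 + ?n)} else {}) \<union>
       {(1 + d, 1 + d + 1) | d. d < ?n \<and> (1 + d, 1 + d + 1) \<in> blue x}"
      then show "y \<in> blue x" by (auto simp: bblue_def split: if_splits)
    next
      fix y assume y: "y \<in> blue x"
      then consider a where "y = (a, a+1)" "1 \<le> a" "a \<le> ?n" | "y = (1, ?n + 1)" using ba by blast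
      then show "y \<in> (if bblue x then {(1, 1 + ?n)} else {}) \<union>
       {(1 + d, 1 + d + 1) | d. d < ?n \<and> (1 + d, 1 + d + 1) \<in> blue x}"
      proof cases
        case 1
        then show ?thesis using y by (auto intro!: exI[of _ "a - 1"])
      next
        case 2 then show ?thesis using y by (simp add: bblue_def)
      qed
    qed
    finally show ?thesis .
  qed
  have R: "inR 1 (corolla bsize x) = red x" using ba by (simp add: corolla_def inRl_rep)
  have N: "nleaves (corolla bsize x) = ?n" by (simp add: corolla_def nl_rep)
  show ?thesis unfolding F_def B R N by (simp add: bsize_def blue_def red_def)
qed

lemma wf_corolla: "is_bubble x \<Longrightarrow> wf_env (corolla bsize x)"
proof -
  have "wf_list BUB bsize (replicate k Leaf)" for k by (induction k) auto
  then show "is_bubble x \<Longrightarrow> wf_env (corolla bsize x)" by (simp add: corolla_def)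
qed



lemma lcl_rep: "1 \<le> i \<Longrightarrow> i \<le> k \<Longrightarrow> lcl g j (replicate k Leaf) i = ectx g (j + i - 1)"
proof (induction k arbitrary: j i)
  case 0 then show ?case by simp
next
  case (Suc k)
  show ?case
  proof (cases "i = 1")
    case True then show ?thesis by simp
  next
    case False
    then have "lcl g j (replicate (Suc k) Leaf) i = lcl g (Suc j) (replicate k Leaf) (i - 1)" using Suc(2) by simp
    also have "\<dots> = ectx g (Suc j + (i - 1) - 1)" using Suc False by simp
    
    finally show ?thesis using False Suc(2) by simp
  qed
qed

lemma inB_corolla: "inB p (corolla bsize y) = {(p + d, p + d + 1) | d. d < bsize y \<and> (1 + d, 1 + d + 1) \<in> blue y}"
  by (simp add: corolla_def inBl_rep)

lemma F_blue: "blue (F t) = bl Root 1 t" by (simp add: F_def blue_def)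
lemma F_red: "red (F t) = inR 1 t" by (simp add: F_def red_def)

lemma smap_mem: "z \<in> smap q m X \<Longrightarrow> \<exists>w\<in>X. z = (sg q m (fst w), sg q m (snd w))"
  unfolding smap_def by (auto, metis fst_conv snd_conv)

lemma colour_cond: "out_colour y = in_colour x i \<Longrightarrow> bblue y \<longleftrightarrow> ectx x i = Unc"
proof -
  assume col: "out_colour y = in_colour x i"
  have o: "out_colour y = (if bblue y then 1 else 2)" by (simp add: out_colour_def bblue_def)
  have n: "in_colour x i = (if ectx x i = Unc then 1 else 2)" by (simp add: in_colour_def ectx_def)
  show ?thesis using col unfolding o n by (cases "bblue y"; cases "ectx x i = Unc"; simp)
qed

lemma bub_comp:
  assumes d: "bulle_defined x i y"
  shows "is_bubble (cncb_comp x i y)"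
proof -
  have bx: "is_bubble x" and bY: "is_bubble y" and i: "1 \<le> i" "i \<le> bsize x"
    and col: "out_colour y = in_colour x i" using d by (auto simp: bulle_defined_def)
  let ?tx = "corolla bsize x" and ?ty = "corolla bsize y"
  let ?n = "bsize x" and ?m = "bsize y"
  have wx: "wf_env ?tx" by (rule wf_corolla[OF bx])
  have wy: "wf_env ?ty" by (rule wf_corolla[OF bY])
  have nx: "nleaves ?tx = ?n" and ny: "nleaves ?ty = ?m" by (simp_all add: corolla_def nl_rep)
  have m2: "2 \<le> ?m" and n2: "2 \<le> ?n" using bx bY by (auto simp: is_bubble_def)
  have eq: "F (graft ?tx i ?ty) = cncb_comp x i y"
    using F_graft[OF wx wy i(1)] i nx F_corolla[OF bx] F_corolla[OF bY] by simp
  have bnc: "is_bnc (cncb_comp x i y)" using F_bnc[OF wf_graft[OF i(1) _ wx wy]] i nx eq by simp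
  have c: "lc Root ?tx i = ectx x i" using lcl_rep[OF i] by (simp add: corolla_def)
  have cond: "bblue y \<longleftrightarrow> ectx x i = Unc"
    by (rule colour_cond[OF col])
  have M: "bl Root 1 (graft ?tx i ?ty) = smap i ?m (bl Root 1 ?tx - {(i, i + 1)}) \<union> bl (ectx x i) i ?ty"
       "rd Root 1 (graft ?tx i ?ty) = smap i ?m (rd Root 1 ?tx) \<union> rd (ectx x i) i ?ty"
    using morph(1)[OF wx wy i(1), of Root 1] i nx ny c by auto
  have blx0: "blue (F ?tx) = blue x" "red (F ?tx) = red x" using F_corolla[OF bx] by simp_all
  have blx: "bl Root 1 ?tx = blue x" "inR 1 ?tx = red x" using blx0 unfolding F_def blue_def red_def by simp_all
  have ba: "red x = {}" "blue x \<subseteq> {(a, a+1) | a. 1 \<le> a \<and> a \<le> ?n} \<union> {(1, ?n + 1)}"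
    using bubble_arcs[OF bx] by auto
  have inRy: "inR i ?ty = {}" by (simp add: corolla_def inRl_rep)
  have R: "red (cncb_comp x i y) = {}"
  proof -
    have "red (cncb_comp x i y) = inR 1 (graft ?tx i ?ty)" using eq F_red by metis
    also have "\<dots> = {}" using M(2) blx(2) ba(1) inRy cond topR_Root by (auto simp: corolla_def smap_def)
    finally show ?thesis .
  qed
  have B: "blue (cncb_comp x i y) \<subseteq> {(a, a+1) | a. True} \<union> {(1, ?n + ?m)}"
  proof
    fix z assume "z \<in> blue (cncb_comp x i y)"
    then have "z \<in> bl Root 1 (graft ?tx i ?ty)" using eq F_blue by metis
    then consider (a) "z \<in> smap i ?m (blue x - {(i, i + 1)})" | (b) "z \<in> topB (ectx x i) i ?ty" | (c) "z \<in> inB i ?ty"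
    proof -
      have "z \<in> smap i ?m (blue x - {(i, i + 1)}) \<union> topB (ectx x i) i ?ty \<union> inB i ?ty"
        using \<open>z \<in> bl Root 1 (graft ?tx i ?ty)\<close> unfolding M(1) blx(1) by simp
      then show ?thesis using that by blast
    qed
    then show "z \<in> {(a, a+1) | a. True} \<union> {(1, ?n + ?m)}"
    proof cases
      case a
      then obtain w where w: "w \<in> blue x" "w \<noteq> (i, i+1)" "z = (sg i ?m (fst w), sg i ?m (snd w))"
        using smap_mem by blast
      then consider a where "w = (a, a+1)" "1 \<le> a" "a \<le> ?n" | "w = (1, ?n + 1)" using ba by blast
      then show ?thesis
      proof cases
        case 1 then show ?thesis using w m2 by (auto simp: sg_def)
      next
        case 2 then show ?thesis using w m2 n2 i by (auto simp: sg_def)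
      qed
    next
      case b then show ?thesis using cond by (auto simp: corolla_def split: if_splits)
    next
      case c then show ?thesis by (auto simp: inB_corolla)
    qed
  qed
  have sz: "bsize (cncb_comp x i y) = ?n + ?m - 1" by (simp add: cncb_alt bsize_def)
  show ?thesis unfolding is_bubble_def
  proof (intro conjI bnc)
    show "2 \<le> bsize (cncb_comp x i y)" using sz m2 n2 by simp
    show "\<forall>a\<in>blue (cncb_comp x i y) \<union> red (cncb_comp x i y). \<not> is_diagonal (bsize (cncb_comp x i y)) a"
      using B R sz m2 n2 by (auto simp: is_diagonal_def)
  qed
qed

lemma env_wf: "env_eq t s \<Longrightarrow> wf_env t \<and> wf_env s \<and> nleaves t = nleaves s"
proof (induction rule: env_eq.induct)
  case (gen x i y)
  have bx: "is_bubble x" and bY: "is_bubble y" and i: "1 \<le> i" "i \<le> bsize x"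
    using gen by (auto simp: bulle_defined_def)
  have nx: "nleaves (corolla bsize x) = bsize x" "nleaves (corolla bsize y) = bsize y"
    "nleaves (corolla bsize (cncb_comp x i y)) = bsize (cncb_comp x i y)" by (simp_all add: corolla_def nl_rep)
  have sz: "bsize (cncb_comp x i y) = bsize x + bsize y - 1" by (simp add: cncb_alt bsize_def)
  have "wf_env (graft (corolla bsize x) i (corolla bsize y))"
    using wf_graft[OF i(1) _ wf_corolla[OF bx] wf_corolla[OF bY]] i nx by simp
  moreover have "nleaves (graft (corolla bsize x) i (corolla bsize y)) = bsize x + bsize y - 1"
    using nleaves_graft[of i "corolla bsize x" "corolla bsize y"] i nx by simp
  moreover have "wf_env (corolla bsize (cncb_comp x i y))" by (rule wf_corolla[OF bub_comp[OF gen]])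
  ultimately show ?case using nx(3) sz by simp
next
  case (comp t t' s s' i)
  then show ?case using wf_graft[of i t s] wf_graft[of i t' s'] nleaves_graft[of i t s] nleaves_graft[of i t' s'] by simp
qed auto

lemma F_env: "env_eq t s \<Longrightarrow> F t = F s"
proof (induction rule: env_eq.induct)
  case (gen x i y)
  have bx: "is_bubble x" and bY: "is_bubble y" and i: "1 \<le> i" "i \<le> bsize x"
    using gen by (auto simp: bulle_defined_def)
  have nx: "nleaves (corolla bsize x) = bsize x" by (simp add: corolla_def nl_rep)
  show ?case using F_graft[OF wf_corolla[OF bx] wf_corolla[OF bY] i(1)] i nx F_corolla[OF bx] F_corolla[OF bY]
    by (simp add: F_corolla[OF bub_comp[OF gen]])
next
  case (comp t t' s s' i)
  have w: "wf_env t \<and> wf_env t' \<and> nleaves t = nleaves t'" "wf_env s \<and> wf_env s' \<and> nleaves s = nleaves s'"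
    using env_wf comp by blast+
  then show ?case using F_graft[of t s i] F_graft[of t' s' i] comp by simp
qed auto



definition tau :: "nat \<Rightarrow> nat \<Rightarrow> nat \<Rightarrow> nat" where "tau a d v = (if v \<le> a then v else v + 1 - d)"
definition tmap :: "nat \<Rightarrow> nat \<Rightarrow> arc set \<Rightarrow> arc set" where
  "tmap a d X = (\<lambda>(x,y). (tau a d x, tau a d y)) ` X"
definition dmap :: "nat \<Rightarrow> arc set \<Rightarrow> arc set" where
  "dmap a X = (\<lambda>(x,y). (x + 1 - a, y + 1 - a)) ` X"
definition Oset :: "nat \<Rightarrow> nat \<Rightarrow> arc set" where
  "Oset a b = {(x,y). y \<le> a \<or> b \<le> x \<or> (x \<le> a \<and> b \<le> y)}"
definition Iset :: "nat \<Rightarrow> nat \<Rightarrow> arc set" where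
  "Iset a b = {(x,y). a \<le> x \<and> y \<le> b}"

definition outer :: "bnc \<Rightarrow> nat \<Rightarrow> nat \<Rightarrow> bnc" where
  "outer c a b = (bsize c - (b - a) + 1,
     tmap a (b - a) (blue c \<inter> Oset a b - {(a,b)}) \<union> (if (a,b) \<in> blue c then {(a, a+1)} else {}),
     tmap a (b - a) (red c \<inter> Oset a b - {(a,b)}))"
definition inner :: "bnc \<Rightarrow> nat \<Rightarrow> nat \<Rightarrow> bnc" where
  "inner c a b = (b - a,
     dmap a (blue c \<inter> Iset a b - {(a,b)}) \<union> (if (a,b) \<in> blue c then {(1, b - a + 1)} else {}),
     dmap a (red c \<inter> Iset a b - {(a,b)}))"

lemma img_pair: "z \<in> (\<lambda>(x,y). (f x, g y)) ` X \<Longrightarrow> \<exists>x y. (x,y) \<in> X \<and> z = (f x, g y)"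
  by auto

lemma unit_nc: "\<not> crossing (a, Suc a) y \<and> \<not> crossing y (a, Suc a)"
  by (cases y) (auto simp: crossing_def)

lemma bnc_parts: "is_bnc c \<Longrightarrow> 2 \<le> bsize c \<Longrightarrow>
   blue c \<union> red c \<subseteq> arcs (bsize c) \<and> blue c \<inter> red c = {} \<and>
   (\<forall>x\<in>blue c \<union> red c. \<forall>y\<in>blue c \<union> red c. \<not> crossing x y) \<and> (\<forall>x\<in>red c. is_diagonal (bsize c) x)"
  by (auto simp: is_bnc_def Let_def bnc_unit_def bsize_def)

lemma bnc_intro: "2 \<le> bsize c \<Longrightarrow> blue c \<union> red c \<subseteq> arcs (bsize c) \<Longrightarrow> blue c \<inter> red c = {} \<Longrightarrow>
   (\<forall>x\<in>blue c \<union> red c. \<forall>y\<in>blue c \<union> red c. \<not> crossing x y) \<Longrightarrow> (\<forall>x\<in>red c. is_diagonal (bsize c) x) \<Longrightarrow> is_bnc c"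
  by (auto simp: is_bnc_def Let_def)

locale sctx =
  fixes c :: bnc and a b :: nat
  assumes bnc: "is_bnc c" and n2: "2 \<le> bsize c" and col: "(a,b) \<in> blue c \<union> red c"
    and dg: "is_diagonal (bsize c) (a,b)"
begin

abbreviation "n \<equiv> bsize c"
abbreviation "d \<equiv> b - a"

lemma parts: "blue c \<union> red c \<subseteq> arcs n" "blue c \<inter> red c = {}"
   "\<And>x y. x \<in> blue c \<union> red c \<Longrightarrow> y\<in>blue c \<union> red c \<Longrightarrow> \<not> crossing x y" "\<And>x. x \<in> red c \<Longrightarrow> is_diagonal n x"
  using bnc_parts[OF bnc n2] by auto

lemma ab: "1 \<le> a" "a + 2 \<le> b" "b \<le> n + 1" "d + 1 \<le> n" "2 \<le> d"
proof -
  have "(a,b) \<in> arcs n" "b \<noteq> a + 1" "(a,b) \<noteq> (1, n+1)" using dg by (auto simp: is_diagonal_def)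
  then show "1 \<le> a" "a + 2 \<le> b" "b \<le> n + 1" "d + 1 \<le> n" "2 \<le> d" by (auto simp: arcs_def)
qed

lemma arc_rng: "(x,y) \<in> blue c \<union> red c \<Longrightarrow> 1 \<le> x \<and> x < y \<and> y \<le> n + 1"
  using parts(1) by (auto simp: arcs_def)

lemma split: "(x,y) \<in> blue c \<union> red c \<Longrightarrow> (x,y) \<in> Oset a b \<or> (x,y) \<in> Iset a b"
proof -
  assume m: "(x,y) \<in> blue c \<union> red c"
  have "\<not> crossing (x,y) (a,b)" "\<not> crossing (a,b) (x,y)" using parts(3)[OF m col] parts(3)[OF col m] by auto
  then show ?thesis using arc_rng[OF m] by (auto simp: crossing_def Oset_def Iset_def)
qed

lemma tau_a: "v \<le> a \<or> b \<le> v \<Longrightarrow> sg a d (tau a d v) = v"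
  using ab by (auto simp: tau_def sg_def)

lemma smap_tmap: "X \<subseteq> Oset a b \<Longrightarrow> X \<subseteq> blue c \<union> red c \<Longrightarrow> smap a d (tmap a d X) = X"
proof -
  assume X: "X \<subseteq> Oset a b" and X2: "X \<subseteq> blue c \<union> red c"
  have "smap a d (tmap a d X) = (\<lambda>(x,y). (sg a d (tau a d x), sg a d (tau a d y))) ` X"
    unfolding smap_def tmap_def image_image by (simp add: case_prod_beta)
  also have "\<dots> = (\<lambda>z. z) ` X"
  proof (rule image_cong[OF HOL.refl])
    fix z assume "z \<in> X"
    moreover have "fst z < snd z" using arc_rng[of "fst z" "snd z"] X2 \<open>z \<in> X\<close> by auto
    ultimately have "fst z \<le> a \<or> b \<le> fst z" "snd z \<le> a \<or> b \<le> snd z" using X ab by (auto simp: Oset_def)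
    then show "(\<lambda>(x,y). (sg a d (tau a d x), sg a d (tau a d y))) z = z"
      using tau_a by (cases z) auto
  qed
  finally show ?thesis by simp
qed

lemma shf_dmap: "X \<subseteq> Iset a b \<Longrightarrow> X \<subseteq> blue c \<union> red c \<Longrightarrow> shf a (dmap a X) = X"
proof -
  assume X: "X \<subseteq> Iset a b" and X2: "X \<subseteq> blue c \<union> red c"
  have "shf a (dmap a X) = (\<lambda>(x,y). (x + 1 - a + a - 1, y + 1 - a + a - 1)) ` X"
    unfolding shf_def dmap_def image_image by (simp add: case_prod_beta)
  also have "\<dots> = (\<lambda>z. z) ` X"
  proof (rule image_cong[OF HOL.refl])
    fix z assume "z \<in> X"
    moreover have "fst z < snd z" using arc_rng[of "fst z" "snd z"] X2 \<open>z \<in> X\<close> by auto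
    ultimately have "a \<le> fst z" "a \<le> snd z" using X by (auto simp: Iset_def)
    then show "(\<lambda>(x,y). (x + 1 - a + a - 1, y + 1 - a + a - 1)) z = z" by (cases z) auto
  qed
  finally show ?thesis by simp
qed

lemma tmap_unit: "(a, a+1) \<notin> tmap a d (X \<inter> Oset a b - {(a,b)})" if "X \<subseteq> blue c \<union> red c"
proof
  assume "(a, a+1) \<in> tmap a d (X \<inter> Oset a b - {(a,b)})"
  then obtain x y where "(x,y) \<in> X \<inter> Oset a b - {(a,b)}" "(a, a+1) = (tau a d x, tau a d y)"
    unfolding tmap_def using img_pair[of "(a, a+1)" "tau a d" "tau a d"] by blast
  then have xy: "(x,y) \<in> X" "(x,y) \<in> Oset a b" "(x,y) \<noteq> (a,b)" "tau a d x = a" "tau a d y = a + 1" by auto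
  have r: "1 \<le> x \<and> x < y \<and> y \<le> n + 1" using arc_rng xy(1) that by blast
  show False using xy r ab by (auto simp: tau_def Oset_def split: if_splits)
qed

lemma dmap_top: "(1, d+1) \<notin> dmap a (X \<inter> Iset a b - {(a,b)})" if "X \<subseteq> blue c \<union> red c"
proof
  assume "(1, d+1) \<in> dmap a (X \<inter> Iset a b - {(a,b)})"
  then obtain x y where "(x,y) \<in> X \<inter> Iset a b - {(a,b)}" "(1, d+1) = (x + 1 - a, y + 1 - a)"
    unfolding dmap_def using img_pair[of "(1, d+1)" "\<lambda>x. x + 1 - a" "\<lambda>x. x + 1 - a"] by blast
  then have xy: "(x,y) \<in> X" "(x,y) \<in> Iset a b" "(x,y) \<noteq> (a,b)" "x + 1 - a = 1" "y + 1 - a = d + 1" by auto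
  show False using xy ab by (auto simp: Iset_def)
qed

lemma recompose: "cncb_comp (outer c a b) a (inner c a b) = c"
proof -
  let ?B = "blue c" and ?R = "red c"
  let ?e = "(a, b)"
  have bo: "bsize (outer c a b) = n - d + 1" "blue (outer c a b) = tmap a d (?B \<inter> Oset a b - {?e}) \<union> (if ?e \<in> ?B then {(a, a+1)} else {})"
    "red (outer c a b) = tmap a d (?R \<inter> Oset a b - {?e})"
    by (simp_all add: outer_def bsize_def blue_def red_def)
  have bi: "bsize (inner c a b) = d" "blue (inner c a b) = dmap a (?B \<inter> Iset a b - {?e}) \<union> (if ?e \<in> ?B then {(1, d+1)} else {})"
    "red (inner c a b) = dmap a (?R \<inter> Iset a b - {?e})"
    by (simp_all add: inner_def bsize_def blue_def red_def)
  have ee: "(a, a + d) = ?e" using ab by simp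
  have sz: "n - d + 1 + d - 1 = n" using ab by simp
  have sm1: "smap a d {(a, a+1)} = {?e}" using ab by (simp add: smap_def sg_def)
  have sh1: "shf a {(1, d+1)} = {?e}" using ab by (simp add: shf_def)
  have smI: "smap a d (if P then {(a, a+1)} else {}) = (if P then {?e} else {})" for P
    using sm1 by (cases P) (simp_all add: smap_def)
  have shI: "shf a (if P then {(1, d+1)} else {}) = (if P then {?e} else {})" for P
    using sh1 by (cases P) (simp_all add: shf_def)
  have shU: "shf a (X \<union> Y) = shf a X \<union> shf a Y" for X Y by (simp add: shf_def image_Un)
  have t1: "smap a d (tmap a d (?B \<inter> Oset a b - {?e})) = ?B \<inter> Oset a b - {?e}"
    by (rule smap_tmap) blast+
  have t2: "smap a d (tmap a d (?R \<inter> Oset a b - {?e})) = ?R \<inter> Oset a b - {?e}"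
    by (rule smap_tmap) blast+
  have t3: "shf a (dmap a (?B \<inter> Iset a b - {?e})) = ?B \<inter> Iset a b - {?e}"
    by (rule shf_dmap) blast+
  have t4: "shf a (dmap a (?R \<inter> Iset a b - {?e})) = ?R \<inter> Iset a b - {?e}"
    by (rule shf_dmap) blast+
  have smB: "smap a d (blue (outer c a b)) = (?B \<inter> Oset a b - {?e}) \<union> (if ?e \<in> ?B then {?e} else {})"
    unfolding bo(2) smap_un smI t1 ..
  have smR: "smap a d (red (outer c a b)) = ?R \<inter> Oset a b - {?e}"
    unfolding bo(3) t2 ..
  have shB: "shf a (blue (inner c a b)) = (?B \<inter> Iset a b - {?e}) \<union> (if ?e \<in> ?B then {?e} else {})"
    unfolding bi(2) shU shI t3 ..
  have shR: "shf a (red (inner c a b)) = ?R \<inter> Iset a b - {?e}"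
    unfolding bi(3) t4 ..
  have uB: "(?B \<inter> Oset a b) \<union> (?B \<inter> Iset a b) = ?B" using split by auto
  have uR: "(?R \<inter> Oset a b) \<union> (?R \<inter> Iset a b) = ?R" using split by auto
  have cB1: "(a, a+1) \<in> blue (outer c a b) \<longleftrightarrow> ?e \<in> ?B" using tmap_unit[of ?B] unfolding bo(2) by auto
  have cR1: "(a, a+1) \<notin> red (outer c a b)" using tmap_unit[of ?R] unfolding bo(3) by auto
  have cB2: "(1, d+1) \<in> blue (inner c a b) \<longleftrightarrow> ?e \<in> ?B" using dmap_top[of ?B] unfolding bi(2) by auto
  have cR2: "(1, d+1) \<notin> red (inner c a b)" using dmap_top[of ?R] unfolding bi(3) by auto
  have B': "blue (cncb_comp (outer c a b) a (inner c a b)) = ?B"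
  proof -
    have "blue (cncb_comp (outer c a b) a (inner c a b)) =
      ((smap a d (blue (outer c a b)) \<union> shf a (blue (inner c a b))) - {?e}) \<union>
      (if (a, a+1) \<in> blue (outer c a b) \<and> (1, d + 1) \<in> blue (inner c a b) then {?e} else {})"
      unfolding cncb_alt bi(1) ee by (simp add: blue_def)
    also have "\<dots> = (?B - {?e}) \<union> (if ?e \<in> ?B then {?e} else {})"
      unfolding smB shB cB1 cB2 using uB by auto
    also have "\<dots> = ?B" by auto
    finally show ?thesis .
  qed
  have R': "red (cncb_comp (outer c a b) a (inner c a b)) = ?R"
  proof -
    have "red (cncb_comp (outer c a b) a (inner c a b)) =
      ((smap a d (red (outer c a b)) \<union> shf a (red (inner c a b))) - {?e}) \<union>
      (if (a, a+1) \<notin> blue (outer c a b) \<union> red (outer c a b) \<and> (1, d + 1) \<notin> blue (inner c a b) \<union> red (inner c a b) then {?e} else {})"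
      unfolding cncb_alt bi(1) ee by (simp add: red_def)
    also have "\<dots> = (?R - {?e}) \<union> (if ?e \<notin> ?B then {?e} else {})"
      unfolding smR shR using cB1 cB2 cR1 cR2 uR by auto
    also have "\<dots> = ?R" using col parts(2) by auto
    finally show ?thesis .
  qed
  have S': "bsize (cncb_comp (outer c a b) a (inner c a b)) = n"
    unfolding cncb_alt bo(1) bi(1) using sz by (simp add: bsize_def)
  show ?thesis using B' R' S' by (metis blue_def bsize_def red_def prod_eq_iff)
qed

end



context sctx begin

definition V :: "nat \<Rightarrow> bool" where "V v = (v \<le> a \<or> b \<le> v)"

lemma tau_lt: "V v \<Longrightarrow> V w \<Longrightarrow> (tau a d v < tau a d w) = (v < w)"
  using ab by (auto simp: V_def tau_def)

lemma tau_eq: "V v \<Longrightarrow> V w \<Longrightarrow> (tau a d v = tau a d w) = (v = w)"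
  using ab by (auto simp: V_def tau_def)

lemma tau_cross: "V x1 \<Longrightarrow> V y1 \<Longrightarrow> V x2 \<Longrightarrow> V y2 \<Longrightarrow>
  crossing (tau a d x1, tau a d y1) (tau a d x2, tau a d y2) = crossing (x1, y1) (x2, y2)"
  by (simp add: crossing_def tau_lt)

lemma OV: "(x,y) \<in> blue c \<union> red c \<Longrightarrow> (x,y) \<in> Oset a b \<Longrightarrow> V x \<and> V y"
  using arc_rng[of x y] by (auto simp: Oset_def V_def)

lemma tau_rng: "(x,y) \<in> blue c \<union> red c \<Longrightarrow> (x,y) \<in> Oset a b \<Longrightarrow>
   1 \<le> tau a d x \<and> tau a d x < tau a d y \<and> tau a d y \<le> n - d + 2"
proof -
  assume m: "(x,y) \<in> blue c \<union> red c" and o: "(x,y) \<in> Oset a b"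
  have r: "1 \<le> x" "x < y" "y \<le> n + 1" using arc_rng[OF m] by auto
  have v: "V x" "V y" using OV[OF m o] by auto
  have "tau a d x < tau a d y" using tau_lt[OF v] r by simp
  moreover have "1 \<le> tau a d x" using r ab v by (auto simp: tau_def V_def)
  moreover have "tau a d y \<le> n - d + 2" using r ab v by (auto simp: tau_def V_def)
  ultimately show ?thesis by simp
qed

lemma outer_mem: "z \<in> blue (outer c a b) \<union> red (outer c a b) \<Longrightarrow>
   (z = (a, a+1) \<and> (a,b) \<in> blue c) \<or> (\<exists>x y. (x,y) \<in> blue c \<union> red c \<and> (x,y) \<in> Oset a b \<and> (x,y) \<noteq> (a,b) \<and> z = (tau a d x, tau a d y))"
  unfolding outer_def blue_def red_def tmap_def by (auto split: if_splits)

lemma outer_blue: "z \<in> blue (outer c a b) \<Longrightarrow>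
   (z = (a, a+1) \<and> (a,b) \<in> blue c) \<or> (\<exists>x y. (x,y) \<in> blue c \<and> (x,y) \<in> Oset a b \<and> (x,y) \<noteq> (a,b) \<and> z = (tau a d x, tau a d y))"
  unfolding outer_def blue_def red_def tmap_def by (auto split: if_splits)

lemma outer_red: "z \<in> red (outer c a b) \<Longrightarrow>
   (\<exists>x y. (x,y) \<in> red c \<and> (x,y) \<in> Oset a b \<and> (x,y) \<noteq> (a,b) \<and> z = (tau a d x, tau a d y))"
  unfolding outer_def blue_def red_def tmap_def by auto

lemma outer_size: "bsize (outer c a b) = n - d + 1" by (simp add: outer_def bsize_def)
lemma inner_size: "bsize (inner c a b) = d" by (simp add: inner_def bsize_def)

lemma outer_bnc: "is_bnc (outer c a b)"
proof (rule bnc_intro)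
  let ?O = "outer c a b"
  show "2 \<le> bsize ?O" using ab by (simp add: outer_size)
  show "blue ?O \<union> red ?O \<subseteq> arcs (bsize ?O)"
  proof
    fix z assume z: "z \<in> blue ?O \<union> red ?O"
    from outer_mem[OF z] show "z \<in> arcs (bsize ?O)"
    proof
      assume "z = (a, a+1) \<and> (a,b) \<in> blue c" then show ?thesis using ab by (auto simp: arcs_def outer_size)
    next
      assume "\<exists>x y. (x,y) \<in> blue c \<union> red c \<and> (x,y) \<in> Oset a b \<and> (x,y) \<noteq> (a,b) \<and> z = (tau a d x, tau a d y)"
      then obtain x y where "(x,y) \<in> blue c \<union> red c" "(x,y) \<in> Oset a b" "z = (tau a d x, tau a d y)" by blast
      then show ?thesis using tau_rng ab by (auto simp: arcs_def outer_size)
    qed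
  qed
  show "blue ?O \<inter> red ?O = {}"
  proof (rule ccontr)
    assume "blue ?O \<inter> red ?O \<noteq> {}"
    then obtain z where zb: "z \<in> blue ?O" and zr: "z \<in> red ?O" by blast
    obtain x2 y2 where r: "(x2,y2) \<in> red c" "(x2,y2) \<in> Oset a b" "(x2,y2) \<noteq> (a,b)" "z = (tau a d x2, tau a d y2)"
      using outer_red[OF zr] by blast
    from outer_blue[OF zb] show False
    proof
      assume "z = (a, a+1) \<and> (a,b) \<in> blue c"
      then have "(a, a+1) \<in> tmap a d (red c \<inter> Oset a b - {(a,b)})" using r unfolding tmap_def by force
      then show False using tmap_unit[of "red c"] by blast
    next
      assume "\<exists>x y. (x,y) \<in> blue c \<and> (x,y) \<in> Oset a b \<and> (x,y) \<noteq> (a,b) \<and> z = (tau a d x, tau a d y)"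
      then obtain x y where b: "(x,y) \<in> blue c" "(x,y) \<in> Oset a b" "z = (tau a d x, tau a d y)" by blast
      have "V x" "V y" using OV b by auto
      moreover have "V x2" "V y2" using OV r by auto
      ultimately have "x = x2" "y = y2" using b(3) r(4) tau_eq by auto
      then show False using b(1) r(1) parts(2) by blast
    qed
  qed
  show "\<forall>x\<in>blue ?O \<union> red ?O. \<forall>y\<in>blue ?O \<union> red ?O. \<not> crossing x y"
  proof (intro ballI)
    fix z w assume z: "z \<in> blue ?O \<union> red ?O" and w: "w \<in> blue ?O \<union> red ?O"
    show "\<not> crossing z w"
    proof (cases "z = (a, a+1) \<or> w = (a, a+1)")
      case True then show ?thesis using unit_nc[of a w] unit_nc[of a z] by auto
    next
      case False
      then obtain x1 y1 x2 y2 where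
        1: "(x1,y1) \<in> blue c \<union> red c" "(x1,y1) \<in> Oset a b" "z = (tau a d x1, tau a d y1)" and
        2: "(x2,y2) \<in> blue c \<union> red c" "(x2,y2) \<in> Oset a b" "w = (tau a d x2, tau a d y2)"
        using outer_mem[OF z] outer_mem[OF w] by blast
      have "\<not> crossing (x1,y1) (x2,y2)" using parts(3)[OF 1(1) 2(1)] .
      then show ?thesis using tau_cross OV[OF 1(1,2)] OV[OF 2(1,2)] 1(3) 2(3) by simp
    qed
  qed
  show "\<forall>z\<in>red ?O. is_diagonal (bsize ?O) z"
  proof
    fix z assume zr: "z \<in> red ?O"
    obtain x y where r: "(x,y) \<in> red c" "(x,y) \<in> Oset a b" "(x,y) \<noteq> (a,b)" "z = (tau a d x, tau a d y)"
      using outer_red[OF zr] by blast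
    have m: "(x,y) \<in> blue c \<union> red c" using r by blast
    have dxy: "is_diagonal n (x,y)" using parts(4) r(1) by blast
    then have ny: "y \<noteq> x + 1" "(x,y) \<noteq> (1, n+1)" by (auto simp: is_diagonal_def)
    have rr: "1 \<le> x" "x < y" "y \<le> n + 1" using arc_rng[OF m] by auto
    have tr: "1 \<le> tau a d x \<and> tau a d x < tau a d y \<and> tau a d y \<le> n - d + 2" using tau_rng[OF m r(2)] .
    have ne1: "tau a d y \<noteq> tau a d x + 1"
      using r(2) r(3) ny rr ab by (auto simp: tau_def Oset_def)
    have ne2: "(tau a d x, tau a d y) \<noteq> (1, n - d + 2)"
      using r(2) ny rr ab by (auto simp: tau_def Oset_def)
    show "is_diagonal (bsize ?O) z" using tr ne1 ne2 r(4) ab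
      by (auto simp: is_diagonal_def arcs_def outer_size)
  qed
qed

lemma inner_mem: "z \<in> blue (inner c a b) \<union> red (inner c a b) \<Longrightarrow>
   (z = (1, d+1) \<and> (a,b) \<in> blue c) \<or> (\<exists>x y. (x,y) \<in> blue c \<union> red c \<and> (x,y) \<in> Iset a b \<and> (x,y) \<noteq> (a,b) \<and> z = (x + 1 - a, y + 1 - a))"
  unfolding inner_def blue_def red_def dmap_def by (auto split: if_splits)

lemma inner_blue: "z \<in> blue (inner c a b) \<Longrightarrow>
   (z = (1, d+1) \<and> (a,b) \<in> blue c) \<or> (\<exists>x y. (x,y) \<in> blue c \<and> (x,y) \<in> Iset a b \<and> (x,y) \<noteq> (a,b) \<and> z = (x + 1 - a, y + 1 - a))"
  unfolding inner_def blue_def red_def dmap_def by (auto split: if_splits)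

lemma inner_red: "z \<in> red (inner c a b) \<Longrightarrow>
   (\<exists>x y. (x,y) \<in> red c \<and> (x,y) \<in> Iset a b \<and> (x,y) \<noteq> (a,b) \<and> z = (x + 1 - a, y + 1 - a))"
  unfolding inner_def blue_def red_def dmap_def by auto

lemma I_rng: "(x,y) \<in> blue c \<union> red c \<Longrightarrow> (x,y) \<in> Iset a b \<Longrightarrow> a \<le> x \<and> x < y \<and> y \<le> b"
  using arc_rng[of x y] by (auto simp: Iset_def)

lemma inner_bnc: "is_bnc (inner c a b)"
proof (rule bnc_intro)
  let ?I = "inner c a b"
  show "2 \<le> bsize ?I" using ab by (simp add: inner_size)
  show "blue ?I \<union> red ?I \<subseteq> arcs (bsize ?I)"
  proof
    fix z assume z: "z \<in> blue ?I \<union> red ?I"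
    from inner_mem[OF z] show "z \<in> arcs (bsize ?I)"
    proof
      assume "z = (1, d+1) \<and> (a,b) \<in> blue c" then show ?thesis using ab by (auto simp: arcs_def inner_size)
    next
      assume "\<exists>x y. (x,y) \<in> blue c \<union> red c \<and> (x,y) \<in> Iset a b \<and> (x,y) \<noteq> (a,b) \<and> z = (x + 1 - a, y + 1 - a)"
      then obtain x y where "(x,y) \<in> blue c \<union> red c" "(x,y) \<in> Iset a b" "z = (x + 1 - a, y + 1 - a)" by blast
      then show ?thesis using I_rng ab by (fastforce simp: arcs_def inner_size)
    qed
  qed
  show "blue ?I \<inter> red ?I = {}"
  proof (rule ccontr)
    assume "blue ?I \<inter> red ?I \<noteq> {}"
    then obtain z where zb: "z \<in> blue ?I" and zr: "z \<in> red ?I" by blast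
    obtain x2 y2 where r: "(x2,y2) \<in> red c" "(x2,y2) \<in> Iset a b" "(x2,y2) \<noteq> (a,b)" "z = (x2 + 1 - a, y2 + 1 - a)"
      using inner_red[OF zr] by blast
    have r2: "a \<le> x2 \<and> x2 < y2 \<and> y2 \<le> b" using I_rng r by blast
    from inner_blue[OF zb] show False
    proof
      assume "z = (1, d+1) \<and> (a,b) \<in> blue c"
      then show False using r r2 ab by auto
    next
      assume "\<exists>x y. (x,y) \<in> blue c \<and> (x,y) \<in> Iset a b \<and> (x,y) \<noteq> (a,b) \<and> z = (x + 1 - a, y + 1 - a)"
      then obtain x y where b: "(x,y) \<in> blue c" "(x,y) \<in> Iset a b" "z = (x + 1 - a, y + 1 - a)" by blast
      have "a \<le> x \<and> x < y \<and> y \<le> b" using I_rng b by blast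
      then have "x = x2" "y = y2" using b(3) r(4) r2 by auto
      then show False using b(1) r(1) parts(2) by blast
    qed
  qed
  show "\<forall>x\<in>blue ?I \<union> red ?I. \<forall>y\<in>blue ?I \<union> red ?I. \<not> crossing x y"
  proof (intro ballI)
    fix z w assume z: "z \<in> blue ?I \<union> red ?I" and w: "w \<in> blue ?I \<union> red ?I"
    have in_arc: "\<And>u. u \<in> blue ?I \<union> red ?I \<Longrightarrow> 1 \<le> fst u \<and> snd u \<le> d + 1"
    proof -
      fix u assume "u \<in> blue ?I \<union> red ?I"
      then have "u \<in> arcs (bsize ?I)" using \<open>blue ?I \<union> red ?I \<subseteq> arcs (bsize ?I)\<close> by blast
      then show "1 \<le> fst u \<and> snd u \<le> d + 1" by (auto simp: arcs_def inner_size)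
    qed
    show "\<not> crossing z w"
    proof (cases "z = (1, d+1) \<or> w = (1, d+1)")
      case True
      then show ?thesis using in_arc[OF z] in_arc[OF w] inside[of z w] inside[of w z] by auto
    next
      case False
      then obtain x1 y1 x2 y2 where
        1: "(x1,y1) \<in> blue c \<union> red c" "(x1,y1) \<in> Iset a b" "z = (x1 + 1 - a, y1 + 1 - a)" and
        2: "(x2,y2) \<in> blue c \<union> red c" "(x2,y2) \<in> Iset a b" "w = (x2 + 1 - a, y2 + 1 - a)"
        using inner_mem[OF z] inner_mem[OF w] by blast
      have "\<not> crossing (x1,y1) (x2,y2)" using parts(3)[OF 1(1) 2(1)] .
      moreover have "a \<le> x1" "a \<le> y1" "a \<le> x2" "a \<le> y2" using I_rng 1 2 by force+
      ultimately show ?thesis using 1(3) 2(3) by (auto simp: crossing_def)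
    qed
  qed
  show "\<forall>z\<in>red ?I. is_diagonal (bsize ?I) z"
  proof
    fix z assume zr: "z \<in> red ?I"
    obtain x y where r: "(x,y) \<in> red c" "(x,y) \<in> Iset a b" "(x,y) \<noteq> (a,b)" "z = (x + 1 - a, y + 1 - a)"
      using inner_red[OF zr] by blast
    have m: "(x,y) \<in> blue c \<union> red c" using r by blast
    have "is_diagonal n (x,y)" using parts(4)[OF r(1)] .
    then have ny: "y \<noteq> x + 1" by (simp add: is_diagonal_def)
    have rr: "a \<le> x" "x < y" "y \<le> b" using I_rng[OF m r(2)] by auto
    show "is_diagonal (bsize ?I) z" using rr ny r(3) r(4) ab
      by (auto simp: is_diagonal_def arcs_def inner_size)
  qed
qed

end



lemma bnc_size2: "is_bnc c \<Longrightarrow> c \<noteq> bnc_unit \<Longrightarrow> 2 \<le> bsize c"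
  by (auto simp: is_bnc_def Let_def)

lemma surj_F: "is_bnc c \<Longrightarrow> \<exists>t. wf_env t \<and> F t = c"
proof (induction "bsize c" arbitrary: c rule: less_induct)
  case less
  show ?case
  proof (cases "c = bnc_unit")
    case True then show ?thesis using F_Leaf by (intro exI[of _ Leaf]) simp
  next
    case nu: False
    have n2: "2 \<le> bsize c" using bnc_size2[OF less(2) nu] .
    show ?thesis
    proof (cases "\<exists>z \<in> blue c \<union> red c. is_diagonal (bsize c) z")
      case False
      then have "is_bubble c" using less(2) n2 by (auto simp: is_bubble_def)
      then show ?thesis using F_corolla wf_corolla by blast
    next
      case True
      then obtain a b where col: "(a,b) \<in> blue c \<union> red c" and dg: "is_diagonal (bsize c) (a,b)" by auto
      interpret sctx c a b using less(2) n2 col dg by unfold_locales auto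
      have sO: "bsize (outer c a b) < bsize c" and sI: "bsize (inner c a b) < bsize c"
        using ab by (simp_all add: outer_size inner_size)
      obtain tO where tO: "wf_env tO" "F tO = outer c a b" using less(1)[OF sO outer_bnc] by blast
      obtain tI where tI: "wf_env tI" "F tI = inner c a b" using less(1)[OF sI inner_bnc] by blast
      have nO: "nleaves tO = bsize (outer c a b)" using tO(2) F_size by metis
      have a1: "1 \<le> a" "a \<le> nleaves tO" using ab nO by (auto simp: outer_size)
      have "wf_env (graft tO a tI)" using wf_graft[OF a1 tO(1) tI(1)] .
      moreover have "F (graft tO a tI) = c" using F_graft[OF tO(1) tI(1) a1] tO(2) tI(2) recompose by simp
      ultimately show ?thesis by blast
    qed
  qed
qed



fun red_t :: "bnc tree \<Rightarrow> bool" and red_l :: "bnc \<Rightarrow> nat \<Rightarrow> bnc tree list \<Rightarrow> bool" where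
  "red_t Leaf = True"
| "red_t (Node h us) = red_l h 1 us"
| "red_l h j [] = True"
| "red_l h j (t # ts) = (red_t t \<and> (\<forall>h2 us2. t = Node h2 us2 \<longrightarrow> (bblue h2 \<longleftrightarrow> ectx h j = Blu)) \<and> red_l h (Suc j) ts)"

lemma ectx_cases: "ectx g j = Blu \<or> ectx g j = Unc" by (simp add: ectx_def)

lemma bubble_eq:
  assumes "is_bubble h" "is_bubble h'" "bsize h = bsize h'" "bblue h = bblue h'"
    "\<And>k. 1 \<le> k \<Longrightarrow> k \<le> bsize h \<Longrightarrow> ectx h k = ectx h' k"
  shows "h = h'"
proof -
  have a: "red h = {}" "blue h \<subseteq> {(a, a+1) | a. 1 \<le> a \<and> a \<le> bsize h} \<union> {(1, bsize h + 1)}"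
    using bubble_arcs[OF assms(1)] by auto
  have a': "red h' = {}" "blue h' \<subseteq> {(a, a+1) | a. 1 \<le> a \<and> a \<le> bsize h} \<union> {(1, bsize h + 1)}"
    using bubble_arcs[OF assms(2)] assms(3) by auto
  have e: "(k, k+1) \<in> blue h \<longleftrightarrow> (k, k+1) \<in> blue h'" if "1 \<le> k" "k \<le> bsize h" for k
    using assms(5)[OF that] by (auto simp: ectx_def split: if_splits)
  have bb: "(1, bsize h + 1) \<in> blue h \<longleftrightarrow> (1, bsize h + 1) \<in> blue h'"
    using assms(3,4) by (simp add: bblue_def)
  have "blue h = blue h'"
  proof (rule set_eqI)
    fix z
    show "z \<in> blue h \<longleftrightarrow> z \<in> blue h'"
    proof
      assume "z \<in> blue h"
      then consider k where "z = (k, k+1)" "1 \<le> k" "k \<le> bsize h" | "z = (1, bsize h + 1)" using a by blast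
      then show "z \<in> blue h'" using e bb \<open>z \<in> blue h\<close> by cases auto
    next
      assume "z \<in> blue h'"
      then consider k where "z = (k, k+1)" "1 \<le> k" "k \<le> bsize h" | "z = (1, bsize h + 1)" using a' by blast
      then show "z \<in> blue h" using e bb \<open>z \<in> blue h'\<close> by cases auto
    qed
  qed
  then show ?thesis using a(1) a'(1) assms(3) by (metis blue_def bsize_def red_def prod_eq_iff)
qed

lemma top_red_node:
  assumes "red_t (Node h us) \<Longrightarrow> True" "c \<noteq> Root" "bblue h \<longleftrightarrow> c = Blu"
  shows "topB c p (Node h us) = (if c = Blu then {(p, p + nleaves_list us)} else {})"
        "topR c p (Node h us) = (if c = Unc then {(p, p + nleaves_list us)} else {})"
  using assms(2,3) by (cases c; auto)+

lemma uniq: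
  "\<And>c c' p t'. wf_env t \<Longrightarrow> wf_env t' \<Longrightarrow> c \<noteq> Root \<Longrightarrow> c' \<noteq> Root \<Longrightarrow> red_t t \<Longrightarrow> red_t t' \<Longrightarrow>
     (\<forall>h us. t = Node h us \<longrightarrow> (bblue h \<longleftrightarrow> c = Blu)) \<Longrightarrow> (\<forall>h us. t' = Node h us \<longrightarrow> (bblue h \<longleftrightarrow> c' = Blu)) \<Longrightarrow>
     nleaves t = nleaves t' \<Longrightarrow> bl c p t = bl c' p t' \<Longrightarrow> rd c p t = rd c' p t' \<Longrightarrow> t = t' \<and> c = c'"
  "\<And>g g' j j' p ts'. wf_list BUB bsize ts \<Longrightarrow> wf_list BUB bsize ts' \<Longrightarrow> red_l g j ts \<Longrightarrow> red_l g' j' ts' \<Longrightarrow>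
     nleaves_list ts = nleaves_list ts' \<Longrightarrow> inBl g j p ts = inBl g' j' p ts' \<Longrightarrow> inRl g j p ts = inRl g' j' p ts' \<Longrightarrow>
     ts = ts' \<and> (\<forall>k < length ts. ectx g (j + k) = ectx g' (j' + k))"
proof (induction t and ts rule: nleaves_nleaves_list.induct)
  case (1 c c' p t')
  then have "t' = Leaf" using nl_node by (cases t') fastforce+
  then show ?case using 1 by (cases c; cases c'; auto)
next
  case (2 h us c c' p t')
  let ?N = "nleaves (Node h us)"
  have N2: "2 \<le> ?N" using nl_node 2(2) by blast
  obtain h' us' where t': "t' = Node h' us'" using 2(3,10) N2 by (cases t') auto
  have wus: "wf_list BUB bsize us" "is_bubble h" "length us = bsize h" using 2(2) by auto
  have wus': "wf_list BUB bsize us'" "is_bubble h'" "length us' = bsize h'" using 2(3) t' by auto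
  have N': "nleaves_list us' = ?N" using 2(10) t' by simp
  have rb: "bblue h \<longleftrightarrow> c = Blu" "bblue h' \<longleftrightarrow> c' = Blu" using 2(8,9) t' by auto
  have tB: "topB c p (Node h us) = (if c = Blu then {(p, p + ?N)} else {})"
    "topR c p (Node h us) = (if c = Unc then {(p, p + ?N)} else {})"
    using rb(1) 2(4) by (cases c; auto)+
  have tB': "topB c' p t' = (if c' = Blu then {(p, p + ?N)} else {})"
    "topR c' p t' = (if c' = Unc then {(p, p + ?N)} else {})"
    using rb(2) 2(5) t' N' by (cases c'; auto)+
  have nin: "(p, p + ?N) \<notin> inB p (Node h us) \<union> inR p (Node h us)" using range(1)[OF 2(2), of "(p, p + ?N)" p] by auto
  have nin': "(p, p + ?N) \<notin> inB p t' \<union> inR p t'" using range(1)[OF 2(3), of "(p, p + ?N)" p] 2(10) by auto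
  have cc: "c = c'"
  proof -
    have "(p, p + ?N) \<in> bl c p (Node h us) \<longleftrightarrow> c = Blu" using tB nin by auto
    moreover have "(p, p + ?N) \<in> bl c' p t' \<longleftrightarrow> c' = Blu" using tB' nin' by auto
    ultimately have "c = Blu \<longleftrightarrow> c' = Blu" using 2(11) by (metis (no_types))
    then show ?thesis using 2(4,5) by (cases c; cases c'; auto)
  qed
  have iB: "inBl h 1 p us = inBl h' 1 p us'"
  proof -
    have "inB p (Node h us) = bl c p (Node h us) - {(p, p + ?N)}" using tB nin by auto
    also have "\<dots> = bl c' p t' - {(p, p + ?N)}" using 2(11) by simp
    also have "\<dots> = inB p t'" using tB' nin' by auto
    finally show ?thesis using t' by simp
  qed
  have iR: "inRl h 1 p us = inRl h' 1 p us'"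
  proof -
    have "inR p (Node h us) = rd c p (Node h us) - {(p, p + ?N)}" using tB nin by auto
    also have "\<dots> = rd c' p t' - {(p, p + ?N)}" using 2(12) by simp
    also have "\<dots> = inR p t'" using tB' nin' by auto
    finally show ?thesis using t' by simp
  qed
  have rl: "red_l h 1 us" "red_l h' 1 us'" using 2(6,7) t' by auto
  from 2(1)[OF wus(1) wus'(1) rl _ iB iR] N' 
  have u: "us = us'" "\<forall>k<length us. ectx h (1 + k) = ectx h' (1 + k)" by auto
  have "h = h'"
  proof (rule bubble_eq)
    show "is_bubble h" "is_bubble h'" by (rule wus(2), rule wus'(2))
    show "bsize h = bsize h'" using wus(3) wus'(3) u(1) by simp
    show "bblue h = bblue h'" using rb cc by simp
    fix k assume k: "1 \<le> k" "k \<le> bsize h"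
    then have "k - 1 < length us" using wus(3) by simp
    then have "ectx h (1 + (k - 1)) = ectx h' (1 + (k - 1))" using u(2) by blast
    then show "ectx h k = ectx h' k" using k by simp
  qed
  then show ?case using t' u(1) cc by simp
next
  case (3 g g' j j' p ts')
  then have "ts' = []" using nl_pos(2)[of ts'] nl_list_pos by (cases ts') fastforce+
  then show ?case by simp
next
  case (4 t ts g g' j j' p ts')
  have wt: "wf_env t" and wts: "wf_list BUB bsize ts" using 4(3) by auto
  have nt1: "1 \<le> nleaves t" using nl_pos(1)[OF wt] .
  obtain t' ts'' where tts: "ts' = t' # ts''" using 4(4,7) nt1 by (cases ts') auto
  have wt': "wf_env t'" and wts': "wf_list BUB bsize ts''" using 4(4) tts by auto
  have nt1': "1 \<le> nleaves t'" using nl_pos(1)[OF wt'] .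
  let ?c = "ectx g j" and ?c' = "ectx g' j'"
  have cr: "?c \<noteq> Root" "?c' \<noteq> Root" by (simp_all add: ectx_def)
  have rt: "red_t t" "\<forall>h us. t = Node h us \<longrightarrow> (bblue h \<longleftrightarrow> ?c = Blu)" "red_l g (Suc j) ts" using 4(5) by auto
  have rt': "red_t t'" "\<forall>h us. t' = Node h us \<longrightarrow> (bblue h \<longleftrightarrow> ?c' = Blu)" "red_l g' (Suc j') ts''" using 4(6) tts by auto
  let ?U = "inBl g j p (t # ts) \<union> inRl g j p (t # ts)"
  have U': "?U = inBl g' j' p (t' # ts'') \<union> inRl g' j' p (t' # ts'')" using 4(8,9) tts by simp
  have M: "\<And>y. (p, y) \<in> ?U \<Longrightarrow> y \<le> p + nleaves t"
  proof -
    fix y assume "(p, y) \<in> ?U"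
    then consider "(p, y) \<in> bl ?c p t \<union> rd ?c p t" | "(p, y) \<in> inBl g (Suc j) (p + nleaves t) ts \<union> inRl g (Suc j) (p + nleaves t) ts" by auto
    then show "y \<le> p + nleaves t"
    proof cases
      case 1 then show ?thesis using rng_tree[OF wt] by fastforce
    next
      case 2 then show ?thesis using rng_list[OF wts 2] nt1 by simp
    qed
  qed
  have M': "\<And>y. (p, y) \<in> ?U \<Longrightarrow> y \<le> p + nleaves t'"
  proof -
    fix y assume "(p, y) \<in> ?U"
    then consider "(p, y) \<in> bl ?c' p t' \<union> rd ?c' p t'" | "(p, y) \<in> inBl g' (Suc j') (p + nleaves t') ts'' \<union> inRl g' (Suc j') (p + nleaves t') ts''" using U' by auto
    then show "y \<le> p + nleaves t'"
    proof cases
      case 1 then show ?thesis using rng_tree[OF wt'] by fastforce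
    next
      case 2 then show ?thesis using rng_list[OF wts' 2] nt1' by simp
    qed
  qed
  have alt: "(p, p + nleaves t) \<in> ?U \<or> (nleaves t = 1 \<and> (\<forall>y. (p,y) \<notin> ?U))"
  proof (cases t)
    case Leaf
    show ?thesis
    proof (cases "?c = Blu")
      case True then show ?thesis using Leaf by simp
    next
      case False
      then have "?c = Unc" using ectx_cases[of g j] by simp
      then have "bl ?c p t \<union> rd ?c p t = {}" using Leaf by simp
      moreover have "\<And>y. (p, y) \<notin> inBl g (Suc j) (p + nleaves t) ts \<union> inRl g (Suc j) (p + nleaves t) ts"
        using rng_list[OF wts] nt1 by fastforce
      ultimately show ?thesis using Leaf by auto
    qed
  next
    case (Node h us)
    then show ?thesis using rt(2) ectx_cases[of g j] by auto
  qed
  let ?U' = "inBl g' j' p (t' # ts'') \<union> inRl g' j' p (t' # ts'')"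
  have alt0: "(p, p + nleaves t') \<in> ?U' \<or> (nleaves t' = 1 \<and> (\<forall>y. (p,y) \<notin> ?U'))"
  proof (cases t')
    case Leaf
    show ?thesis
    proof (cases "?c' = Blu")
      case True then show ?thesis using Leaf by simp
    next
      case False
      then have "?c' = Unc" using ectx_cases[of g' j'] by simp
      then have "bl ?c' p t' \<union> rd ?c' p t' = {}" using Leaf by simp
      moreover have "\<And>y. (p, y) \<notin> inBl g' (Suc j') (p + nleaves t') ts'' \<union> inRl g' (Suc j') (p + nleaves t') ts''"
        using rng_list[OF wts'] nt1' by fastforce
      ultimately show ?thesis using Leaf by auto
    qed
  next
    case (Node h us)
    then show ?thesis using rt'(2) ectx_cases[of g' j'] by auto
  qed
  have alt': "(p, p + nleaves t') \<in> ?U \<or> (nleaves t' = 1 \<and> (\<forall>y. (p,y) \<notin> ?U))"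
    using alt0 unfolding U' .
  have nn: "nleaves t = nleaves t'"
  proof (cases "\<exists>y. (p, y) \<in> ?U")
    case True
    then have "(p, p + nleaves t) \<in> ?U" "(p, p + nleaves t') \<in> ?U" using alt alt' by blast+
    then have "p + nleaves t' \<le> p + nleaves t" "p + nleaves t \<le> p + nleaves t'" using M M' by blast+
    then show ?thesis by simp
  next
    case False
    then have "nleaves t = 1" "nleaves t' = 1" using alt alt' by blast+
    then show ?thesis by simp
  qed
  let ?q = "p + nleaves t"
  have sepB: "bl ?c p t = {x \<in> inBl g j p (t # ts). snd x \<le> ?q}"
    "inBl g (Suc j) ?q ts = {x \<in> inBl g j p (t # ts). \<not> snd x \<le> ?q}"
    using rng_tree[OF wt, of _ ?c p] rng_list[OF wts, of _ g "Suc j" ?q] by fastforce+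
  have sepR: "rd ?c p t = {x \<in> inRl g j p (t # ts). snd x \<le> ?q}"
    "inRl g (Suc j) ?q ts = {x \<in> inRl g j p (t # ts). \<not> snd x \<le> ?q}"
    using rng_tree[OF wt, of _ ?c p] rng_list[OF wts, of _ g "Suc j" ?q] by fastforce+
  have sepB': "bl ?c' p t' = {x \<in> inBl g' j' p (t' # ts''). snd x \<le> ?q}"
    "inBl g' (Suc j') ?q ts'' = {x \<in> inBl g' j' p (t' # ts''). \<not> snd x \<le> ?q}"
    using rng_tree[OF wt', of _ ?c' p] rng_list[OF wts', of _ g' "Suc j'" ?q] nn by fastforce+
  have sepR': "rd ?c' p t' = {x \<in> inRl g' j' p (t' # ts''). snd x \<le> ?q}"
    "inRl g' (Suc j') ?q ts'' = {x \<in> inRl g' j' p (t' # ts''). \<not> snd x \<le> ?q}"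
    using rng_tree[OF wt', of _ ?c' p] rng_list[OF wts', of _ g' "Suc j'" ?q] nn by fastforce+
  have eqB: "inBl g j p (t # ts) = inBl g' j' p (t' # ts'')" "inRl g j p (t # ts) = inRl g' j' p (t' # ts'')"
    using 4(8,9) tts by auto
  have E1: "bl ?c p t = bl ?c' p t'"
  proof -
    have "bl ?c p t = {x \<in> inBl g j p (t # ts). snd x \<le> ?q}" by (rule sepB(1))
    also have "\<dots> = {x \<in> inBl g' j' p (t' # ts''). snd x \<le> ?q}" by (simp only: eqB(1))
    also have "\<dots> = bl ?c' p t'" by (rule sepB'(1)[symmetric])
    finally show ?thesis .
  qed
  have E2: "rd ?c p t = rd ?c' p t'"
  proof -
    have "rd ?c p t = {x \<in> inRl g j p (t # ts). snd x \<le> ?q}" by (rule sepR(1))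
    also have "\<dots> = {x \<in> inRl g' j' p (t' # ts''). snd x \<le> ?q}" by (simp only: eqB(2))
    also have "\<dots> = rd ?c' p t'" by (rule sepR'(1)[symmetric])
    finally show ?thesis .
  qed
  have E3: "inBl g (Suc j) ?q ts = inBl g' (Suc j') ?q ts''"
  proof -
    have "inBl g (Suc j) ?q ts = {x \<in> inBl g j p (t # ts). \<not> snd x \<le> ?q}" by (rule sepB(2))
    also have "\<dots> = {x \<in> inBl g' j' p (t' # ts''). \<not> snd x \<le> ?q}" by (simp only: eqB(1))
    also have "\<dots> = inBl g' (Suc j') ?q ts''" by (rule sepB'(2)[symmetric])
    finally show ?thesis .
  qed
  have E4: "inRl g (Suc j) ?q ts = inRl g' (Suc j') ?q ts''"
  proof -
    have "inRl g (Suc j) ?q ts = {x \<in> inRl g j p (t # ts). \<not> snd x \<le> ?q}" by (rule sepR(2))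
    also have "\<dots> = {x \<in> inRl g' j' p (t' # ts''). \<not> snd x \<le> ?q}" by (simp only: eqB(2))
    also have "\<dots> = inRl g' (Suc j') ?q ts''" by (rule sepR'(2)[symmetric])
    finally show ?thesis .
  qed
  have h1: "t = t' \<and> ?c = ?c'"
    by (rule 4(1)[OF wt wt' cr rt(1) rt'(1) rt(2) rt'(2) nn E1 E2])
  have nl2: "nleaves_list ts = nleaves_list ts''" using 4(7) tts nn by simp
  have h2: "ts = ts'' \<and> (\<forall>k<length ts. ectx g (Suc j + k) = ectx g' (Suc j' + k))"
    using 4(2)[OF wts wts' rt(3) rt'(3) nl2 E3 E4] by simp
  have "\<forall>k<length (t # ts). ectx g (j + k) = ectx g' (j' + k)"
  proof (intro allI impI)
    fix k assume "k < length (t # ts)"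
    then show "ectx g (j + k) = ectx g' (j' + k)"
      using h1 h2 by (cases k) auto
  qed
  then show ?case using h1 h2 tts by simp
qed

lemma uniq_root:
  assumes "wf_env r" "wf_env r'" "red_t r" "red_t r'" "F r = F r'"
  shows "r = r'"
proof (cases r)
  case Leaf
  then have "nleaves r' = 1" using assms(5) F_size by (metis nleaves.simps(1))
  then have "r' = Leaf" using nl_node assms(2) by (cases r') fastforce+
  then show ?thesis using Leaf by simp
next
  case (Node h us)
  have N: "nleaves r = nleaves r'" using assms(5) F_size by metis
  let ?N = "nleaves r"
  have N2: "2 \<le> ?N" using nl_node assms(1) Node by blast
  obtain h' us' where r': "r' = Node h' us'" using assms(2) N N2 by (cases r') auto
  have w: "wf_list BUB bsize us" "is_bubble h" "length us = bsize h" using assms(1) Node by auto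
  have w': "wf_list BUB bsize us'" "is_bubble h'" "length us' = bsize h'" using assms(2) r' by auto
  have B: "bl Root 1 r = bl Root 1 r'" "inR 1 r = inR 1 r'" using assms(5) F_blue F_red by metis+
  have nin: "(1, 1 + ?N) \<notin> inB 1 r \<union> inR 1 r" using range(1)[OF assms(1), of "(1, 1 + ?N)" 1] by auto
  have nin': "(1, 1 + ?N) \<notin> inB 1 r' \<union> inR 1 r'" using range(1)[OF assms(2), of "(1, 1 + ?N)" 1] N by auto
  have t1: "topB Root 1 r = (if bblue h then {(1, 1 + ?N)} else {})" using Node by simp
  have t2: "topB Root 1 r' = (if bblue h' then {(1, 1 + ?N)} else {})" using r' N by simp
  have bb: "bblue h = bblue h'"
  proof -
    have "(1, 1 + ?N) \<in> bl Root 1 r \<longleftrightarrow> bblue h" using t1 nin by auto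
    moreover have "(1, 1 + ?N) \<in> bl Root 1 r' \<longleftrightarrow> bblue h'" using t2 nin' by auto
    ultimately show ?thesis using B(1) by (metis (no_types))
  qed
  have iB: "inBl h 1 1 us = inBl h' 1 1 us'"
  proof -
    have "inB 1 r = bl Root 1 r - {(1, 1 + ?N)}" using t1 nin by auto
    also have "\<dots> = bl Root 1 r' - {(1, 1 + ?N)}" using B(1) by simp
    also have "\<dots> = inB 1 r'" using t2 nin' by auto
    finally show ?thesis using Node r' by simp
  qed
  have iR: "inRl h 1 1 us = inRl h' 1 1 us'" using B(2) Node r' by simp
  have rl: "red_l h 1 us" "red_l h' 1 us'" using assms(3,4) Node r' by auto
  have nl: "nleaves_list us = nleaves_list us'" using N Node r' by simp
  from uniq(2)[OF w(1) w'(1) rl nl iB iR]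
  have u: "us = us'" "\<forall>k<length us. ectx h (1 + k) = ectx h' (1 + k)" by auto
  have "h = h'"
  proof (rule bubble_eq)
    show "is_bubble h" "is_bubble h'" by (rule w(2), rule w'(2))
    show "bsize h = bsize h'" using w(3) w'(3) u(1) by simp
    show "bblue h = bblue h'" by (rule bb)
    fix k assume k: "1 \<le> k" "k \<le> bsize h"
    then have "k - 1 < length us" using w(3) by simp
    then have "ectx h (1 + (k - 1)) = ectx h' (1 + (k - 1))" using u(2) by blast
    then show "ectx h k = ectx h' k" using k by simp
  qed
  then show ?thesis using Node r' u(1) by simp
qed



lemma nl_append: "nleaves_list (xs @ ys) = nleaves_list xs + nleaves_list ys"
  by (induction xs) auto

lemma wf_list_iff: "wf_list BUB bsize xs \<longleftrightarrow> (\<forall>x\<in>set xs. wf_env x)"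
  by (induction xs) auto

lemma GL1: "nleaves_list L1 < i \<Longrightarrow> i \<le> nleaves_list L1 + nleaves t \<Longrightarrow>
   graft_list (L1 @ t # L2) i s = L1 @ graft t (i - nleaves_list L1) s # L2"
proof (induction L1 arbitrary: i)
  case Nil then show ?case by simp
next
  case (Cons x L1)
  have "\<not> i \<le> nleaves x" using Cons(2) by simp
  then have "graft_list ((x # L1) @ t # L2) i s = x # graft_list (L1 @ t # L2) (i - nleaves x) s" by simp
  also have "\<dots> = x # L1 @ graft t (i - nleaves x - nleaves_list L1) s # L2"
    using Cons by simp
  finally show ?case by (simp add: diff_diff_add)
qed

lemma GLleaf: "graft_list (L1 @ Leaf # L2) (Suc (nleaves_list L1)) s = L1 @ s # L2"
  using GL1[of L1 "nleaves_list L1 + 1" Leaf L2 s] by simp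

lemma graft_leaf_pos: "graft (Node g (L1 @ Leaf # L2)) (nleaves_list L1 + 1) s = Node g (L1 @ s # L2)"
  using GL1[of L1 "nleaves_list L1 + 1" Leaf L2 s] by simp

lemma child_rep:
  assumes w: "wf_env (Node g (A @ u # C))" and e: "env_eq u u'"
  shows "env_eq (Node g (A @ u # C)) (Node g (A @ u' # C))"
proof -
  let ?T0 = "Node g (A @ Leaf # C)"
  have w0: "wf_env ?T0" using w by (simp add: wf_list_iff)
  have "env_eq (graft ?T0 (nleaves_list A + 1) u) (graft ?T0 (nleaves_list A + 1) u')"
    by (rule env_eq.comp[OF env_eq.refl[OF w0] e]) (simp_all add: nl_append)
  then show ?thesis by (simp add: GLleaf)
qed

lemma list_cong:
  assumes w: "wf_env (Node g ts)" "wf_env (Node g ts')" and l: "length ts = length ts'"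
    and e: "\<And>k. k < length ts \<Longrightarrow> env_eq (ts ! k) (ts' ! k)"
  shows "env_eq (Node g ts) (Node g ts')"
proof -
  have wts: "\<forall>x\<in>set ts. wf_env x" "\<forall>x\<in>set ts'. wf_env x" using w by (auto simp: wf_list_iff)
  have P: "m \<le> length ts \<Longrightarrow> env_eq (Node g ts) (Node g (take m ts' @ drop m ts))" for m
  proof (induction m)
    case 0 then show ?case using env_eq.refl[OF w(1)] by simp
  next
    case (Suc m)
    then have m: "m < length ts" by simp
    have d: "drop m ts = ts ! m # drop (Suc m) ts" using m by (simp add: Cons_nth_drop_Suc)
    have t: "take (Suc m) ts' = take m ts' @ [ts' ! m]" using m l by (simp add: take_Suc_conv_app_nth)
    have wm: "wf_env (Node g (take m ts' @ ts ! m # drop (Suc m) ts))"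
    proof -
      have "set (take m ts' @ ts ! m # drop (Suc m) ts) \<subseteq> set ts' \<union> set ts"
        using m by (auto dest: in_set_takeD in_set_dropD)
      then show ?thesis using w m l wts by (auto simp: wf_list_iff)
    qed
    have "env_eq (Node g (take m ts' @ ts ! m # drop (Suc m) ts)) (Node g (take m ts' @ ts' ! m # drop (Suc m) ts))"
      by (rule child_rep[OF wm e[OF m]])
    then show ?case using Suc m d t by (auto intro: env_eq.trans)
  qed
  show ?thesis using P[of "length ts"] l by simp
qed

fun nodes :: "bnc tree \<Rightarrow> nat" and nodes_l :: "bnc tree list \<Rightarrow> nat" where
  "nodes Leaf = 0"
| "nodes (Node g ts) = Suc (nodes_l ts)"
| "nodes_l [] = 0"
| "nodes_l (t # ts) = nodes t + nodes_l ts"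

lemma nodes_append: "nodes_l (xs @ ys) = nodes_l xs + nodes_l ys"
  by (induction xs) auto


lemma fill_step: "env_eq T1' T2' \<Longrightarrow> wf_env x \<Longrightarrow> 1 \<le> pos \<Longrightarrow> pos \<le> nleaves T1' \<Longrightarrow>
   graft T1' pos x = T1 \<Longrightarrow> graft T2' pos x = T2 \<Longrightarrow> env_eq T1 T2"
  using env_eq.comp[of T1' T2' x x pos] env_eq.refl[of x] by simp

lemma nodes_pos: "t \<noteq> Leaf \<Longrightarrow> 1 \<le> nodes t" by (cases t) auto

lemma all_leaf: "\<forall>x\<in>set xs. x = Leaf \<Longrightarrow> xs = replicate (length xs) Leaf"
  by (simp add: replicate_length_same)

lemma nl_rep_leaf: "nleaves_list (replicate k (Leaf :: bnc tree)) = k" by (rule nl_rep)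

lemma merge:
  assumes d: "bulle_defined g (length A + 1) h"
    and lg: "length (A @ Node h us # C) = bsize g" and lh: "length us = bsize h"
    and w: "\<forall>x\<in>set (A @ us @ C). wf_env x"
  shows "env_eq (Node g (A @ Node h us # C)) (Node (cncb_comp g (length A + 1) h) (A @ us @ C))"
  using assms
proof (induction "nodes_l (A @ us @ C)" arbitrary: A us C rule: less_induct)
  case less
  let ?j = "length A + 1"
  let ?gh = "cncb_comp g ?j h"
  have bg: "is_bubble g" and bh: "is_bubble h" using less(2) by (auto simp: bulle_defined_def)
  have bgh: "is_bubble ?gh" by (rule bub_comp[OF less(2)])
  have sgh: "bsize ?gh = bsize g + bsize h - 1" by (simp add: cncb_alt bsize_def)
  have h2: "2 \<le> bsize h" using bh by (simp add: is_bubble_def)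
  show ?case
  proof (cases "\<forall>x\<in>set (A @ us @ C). x = Leaf")
    case True
    then have rA: "A = replicate (length A) Leaf" and rU: "us = replicate (length us) Leaf"
      and rC: "C = replicate (length C) Leaf" using all_leaf[of A] all_leaf[of us] all_leaf[of C] by auto
    have nA: "nleaves_list A = length A" using rA nl_rep_leaf by metis
    have cg: "corolla bsize g = Node g (A @ Leaf # C)"
    proof -
      have "A @ Leaf # C = replicate (length (A @ Leaf # C)) Leaf"
        by (rule all_leaf) (use True in auto)
      moreover have "length (A @ Leaf # C) = bsize g" using less(3) by simp
      ultimately have "A @ Leaf # C = replicate (bsize g) Leaf" by metis
      then show ?thesis by (simp add: corolla_def)
    qed
    have ch: "corolla bsize h = Node h us" using rU less(4) by (simp add: corolla_def)
    have cgh: "corolla bsize ?gh = Node ?gh (A @ us @ C)"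
    proof -
      have "A @ us @ C = replicate (length (A @ us @ C)) Leaf"
        by (rule all_leaf) (use True in auto)
      moreover have "length (A @ us @ C) = bsize ?gh" using less(3,4) sgh by simp
      ultimately have "A @ us @ C = replicate (bsize ?gh) Leaf" by simp
      then show ?thesis by (simp add: corolla_def)
    qed
    have "env_eq (graft (corolla bsize g) ?j (corolla bsize h)) (corolla bsize ?gh)"
      by (rule env_eq.gen[OF less(2)])
    moreover have "graft (corolla bsize g) ?j (corolla bsize h) = Node g (A @ Node h us # C)"
      using cg ch graft_leaf_pos[of g A C "Node h us"] nA by simp
    ultimately show ?thesis using cgh by simp
  next
    case False
    then obtain x where x: "x \<in> set (A @ us @ C)" "x \<noteq> Leaf" by blast
    have wx: "wf_env x" using less(5) x(1) by blast
    have nx: "1 \<le> nodes x" using nodes_pos[OF x(2)] .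
    have wall: "\<forall>y\<in>set A. wf_env y" "\<forall>y\<in>set us. wf_env y" "\<forall>y\<in>set C. wf_env y" using less(5) by auto
    consider (a) "x \<in> set A" | (u) "x \<in> set us" | (c) "x \<in> set C" using x(1) by auto
    then show ?thesis
    proof cases
      case a
      then obtain A1 A2 where A: "A = A1 @ x # A2" by (meson split_list)
      let ?A' = "A1 @ Leaf # A2"
      have lt: "nodes_l (?A' @ us @ C) < nodes_l (A @ us @ C)" using A nx by (simp add: nodes_append)
      have IH: "env_eq (Node g (?A' @ Node h us # C)) (Node ?gh (?A' @ us @ C))"
        using less(1)[OF lt] less(2-5) A by (auto simp: nodes_append)
      show ?thesis
      proof (rule fill_step[OF IH wx])
        show "1 \<le> nleaves_list A1 + 1" by simp
        show "nleaves_list A1 + 1 \<le> nleaves (Node g (?A' @ Node h us # C))" by (simp add: nl_append)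
        show "graft (Node g (?A' @ Node h us # C)) (nleaves_list A1 + 1) x = Node g (A @ Node h us # C)"
          using graft_leaf_pos[of g A1 "A2 @ Node h us # C" x] A by simp
        show "graft (Node ?gh (?A' @ us @ C)) (nleaves_list A1 + 1) x = Node ?gh (A @ us @ C)"
          using graft_leaf_pos[of ?gh A1 "A2 @ us @ C" x] A by simp
      qed
    next
      case u
      then obtain U1 U2 where U: "us = U1 @ x # U2" by (meson split_list)
      let ?U' = "U1 @ Leaf # U2"
      have lt: "nodes_l (A @ ?U' @ C) < nodes_l (A @ us @ C)" using U nx by (simp add: nodes_append)
      have IH: "env_eq (Node g (A @ Node h ?U' # C)) (Node ?gh (A @ ?U' @ C))"
        using less(1)[OF lt] less(2-5) U by (auto simp: nodes_append)
      let ?pos = "nleaves_list A + nleaves_list U1 + 1"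
      show ?thesis
      proof (rule fill_step[OF IH wx])
        show "1 \<le> ?pos" by simp
        show "?pos \<le> nleaves (Node g (A @ Node h ?U' # C))" by (simp add: nl_append)
        have "graft_list (A @ Node h ?U' # C) ?pos x = A @ graft (Node h ?U') (?pos - nleaves_list A) x # C"
          by (rule GL1) (simp_all add: nl_append)
        also have "\<dots> = A @ Node h us # C" using GLleaf[of U1 U2 x] U by simp
        finally show "graft (Node g (A @ Node h ?U' # C)) ?pos x = Node g (A @ Node h us # C)" by simp
        have "graft_list ((A @ U1) @ Leaf # (U2 @ C)) (Suc (nleaves_list (A @ U1))) x = (A @ U1) @ x # (U2 @ C)"
          by (rule GLleaf)
        then show "graft (Node ?gh (A @ ?U' @ C)) ?pos x = Node ?gh (A @ us @ C)"
          using U by (simp add: nl_append)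
      qed
    next
      case c
      then obtain C1 C2 where C: "C = C1 @ x # C2" by (meson split_list)
      let ?C' = "C1 @ Leaf # C2"
      have lt: "nodes_l (A @ us @ ?C') < nodes_l (A @ us @ C)" using C nx by (simp add: nodes_append)
      have IH: "env_eq (Node g (A @ Node h us # ?C')) (Node ?gh (A @ us @ ?C'))"
        using less(1)[OF lt] less(2-5) C by (auto simp: nodes_append)
      let ?pos = "nleaves_list A + nleaves_list us + nleaves_list C1 + 1"
      show ?thesis
      proof (rule fill_step[OF IH wx])
        show "1 \<le> ?pos" by simp
        show "?pos \<le> nleaves (Node g (A @ Node h us # ?C'))" by (simp add: nl_append)
        have "graft_list ((A @ Node h us # C1) @ Leaf # C2) (Suc (nleaves_list (A @ Node h us # C1))) x = (A @ Node h us # C1) @ x # C2"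
          by (rule GLleaf)
        then show "graft (Node g (A @ Node h us # ?C')) ?pos x = Node g (A @ Node h us # C)"
          using C by (simp add: nl_append add.assoc)
        have "graft_list ((A @ us @ C1) @ Leaf # C2) (Suc (nleaves_list (A @ us @ C1))) x = (A @ us @ C1) @ x # C2"
          by (rule GLleaf)
        then show "graft (Node ?gh (A @ us @ ?C')) ?pos x = Node ?gh (A @ us @ C)"
          using C by (simp add: nl_append add.assoc)
      qed
    qed
  qed
qed



lemma red_l_nth: "red_l g j ts \<longleftrightarrow> (\<forall>k<length ts. red_t (ts ! k) \<and>
   (\<forall>h2 us2. ts ! k = Node h2 us2 \<longrightarrow> (bblue h2 \<longleftrightarrow> ectx g (j + k) = Blu)))"
proof (induction ts arbitrary: j)
  case Nil then show ?case by simp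
next
  case (Cons t ts)
  show ?case
  proof
    assume "red_l g j (t # ts)"
    then show "\<forall>k<length (t # ts). red_t ((t # ts) ! k) \<and>
      (\<forall>h2 us2. (t # ts) ! k = Node h2 us2 \<longrightarrow> (bblue h2 \<longleftrightarrow> ectx g (j + k) = Blu))"
      using Cons by (auto simp: nth_Cons split: nat.splits)
  next
    assume a: "\<forall>k<length (t # ts). red_t ((t # ts) ! k) \<and>
      (\<forall>h2 us2. (t # ts) ! k = Node h2 us2 \<longrightarrow> (bblue h2 \<longleftrightarrow> ectx g (j + k) = Blu))"
    have "\<forall>k<length ts. red_t (ts ! k) \<and>
      (\<forall>h2 us2. ts ! k = Node h2 us2 \<longrightarrow> (bblue h2 \<longleftrightarrow> ectx g (Suc j + k) = Blu))"
    proof (intro allI impI)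
      fix k assume "k < length ts"
      then show "red_t (ts ! k) \<and> (\<forall>h2 us2. ts ! k = Node h2 us2 \<longrightarrow> (bblue h2 \<longleftrightarrow> ectx g (Suc j + k) = Blu))"
        using a[rule_format, of "Suc k"] by simp
    qed
    then show "red_l g j (t # ts)" using Cons a[rule_format, of 0] by auto
  qed
qed

lemma colour_iff: "out_colour y = in_colour x i \<longleftrightarrow> (bblue y \<longleftrightarrow> ectx x i = Unc)"
proof -
  have o: "out_colour y = (if bblue y then 1 else 2)" by (simp add: out_colour_def bblue_def)
  have n: "in_colour x i = (if ectx x i = Unc then 1 else 2)" by (simp add: in_colour_def ectx_def)
  show ?thesis unfolding o n by (cases "bblue y"; cases "ectx x i = Unc"; simp)
qed

lemma nodes_nth: "k < length ts \<Longrightarrow> nodes (ts ! k) \<le> nodes_l ts"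
proof (induction ts arbitrary: k)
  case Nil then show ?case by simp
next
  case (Cons t ts) then show ?case by (cases k) fastforce+
qed

lemma nodes_le: "length xs = length ys \<Longrightarrow> (\<And>k. k < length xs \<Longrightarrow> nodes (ys ! k) \<le> nodes (xs ! k)) \<Longrightarrow> nodes_l ys \<le> nodes_l xs"
proof (induction xs ys rule: list_induct2)
  case Nil then show ?case by simp
next
  case (Cons x xs y ys)
  have "nodes y \<le> nodes x" using Cons(3)[of 0] by simp
  moreover have "nodes_l ys \<le> nodes_l xs" using Cons(2) Cons(3)[of "Suc k" for k] by simp
  ultimately show ?case by simp
qed

lemma reduce: "wf_env t \<Longrightarrow> \<exists>r. wf_env r \<and> red_t r \<and> env_eq t r \<and> nodes r \<le> nodes t"
proof (induction "nodes t" arbitrary: t rule: less_induct)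
  case less
  show ?case
  proof (cases t)
    case Leaf then show ?thesis using env_eq.refl[of Leaf] by (intro exI[of _ Leaf]) simp
  next
    case (Node g ts)
    have wg: "is_bubble g" "length ts = bsize g" "\<forall>x\<in>set ts. wf_env x" using less(2) Node by (auto simp: wf_list_iff)
    have "\<forall>k. k < length ts \<longrightarrow> (\<exists>r. wf_env r \<and> red_t r \<and> env_eq (ts ! k) r \<and> nodes r \<le> nodes (ts ! k))"
    proof (intro allI impI)
      fix k assume k: "k < length ts"
      have "nodes (ts ! k) < nodes t" using nodes_nth[OF k] Node by simp
      then show "\<exists>r. wf_env r \<and> red_t r \<and> env_eq (ts ! k) r \<and> nodes r \<le> nodes (ts ! k)"
        using less(1) wg(3) k by auto
    qed
    then obtain f where f: "\<And>k. k < length ts \<Longrightarrow> wf_env (f k) \<and> red_t (f k) \<and> env_eq (ts ! k) (f k) \<and> nodes (f k) \<le> nodes (ts ! k)"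
      by metis
    define ts' where "ts' = map f [0..<length ts]"
    have l': "length ts' = length ts" and nth': "\<And>k. k < length ts \<Longrightarrow> ts' ! k = f k" by (simp_all add: ts'_def)
    have wts': "\<forall>x\<in>set ts'. wf_env x" using f by (auto simp: ts'_def)
    have wT': "wf_env (Node g ts')" using wg wts' l' by (simp add: wf_list_iff)
    have e1: "env_eq t (Node g ts')"
      unfolding Node by (rule list_cong) (use less(2) Node wT' l' f nth' in auto)
    have n1: "nodes (Node g ts') \<le> nodes t"
      using nodes_le[of ts ts'] l' f nth' Node by simp
    show ?thesis
    proof (cases "\<exists>k<length ts'. \<exists>h us. ts' ! k = Node h us \<and> \<not> (bblue h \<longleftrightarrow> ectx g (1 + k) = Blu)")
      case True
      then obtain k h us where k: "k < length ts'" "ts' ! k = Node h us" "\<not> (bblue h \<longleftrightarrow> ectx g (1 + k) = Blu)" by blast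
      let ?A = "take k ts'" and ?C = "drop (Suc k) ts'"
      have sp: "ts' = ?A @ Node h us # ?C" using k(1,2) by (metis id_take_nth_drop)
      have lA: "length ?A = k" using k(1) by simp
      have wh: "wf_env (Node h us)" using wts' k(1,2) by (metis nth_mem)
      then have bh: "is_bubble h" "length us = bsize h" "\<forall>x\<in>set us. wf_env x" by (auto simp: wf_list_iff)
      have cc: "bblue h \<longleftrightarrow> ectx g (k + 1) = Unc" using k(3) ectx_cases[of g "k+1"] by auto
      have d: "bulle_defined g (length ?A + 1) h"
        unfolding bulle_defined_def lA using wg bh k(1) l' colour_iff[of h g "k+1"] cc by auto
      have ll: "length (?A @ Node h us # ?C) = bsize g" using sp l' wg(2) by metis
      have wall: "\<forall>x\<in>set (?A @ us @ ?C). wf_env x"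
        using wts' bh(3) by (auto dest: in_set_takeD in_set_dropD)
      let ?gh = "cncb_comp g (length ?A + 1) h"
      let ?T3 = "Node ?gh (?A @ us @ ?C)"
      have e2: "env_eq (Node g ts') ?T3" using merge[OF d ll bh(2) wall] sp by simp
      have bgh: "is_bubble ?gh" by (rule bub_comp[OF d])
      have sgh: "bsize ?gh = bsize g + bsize h - 1" by (simp add: cncb_alt bsize_def)
      have wT3: "wf_env ?T3" using bgh sgh ll bh(2) wall by (simp add: wf_list_iff)
      have n3: "nodes ?T3 < nodes (Node g ts')"
        using sp by (metis (no_types) nodes.simps(2) nodes_l.simps(2) nodes_append nodes.simps(2) add_Suc_right add.assoc lessI add_Suc)
      then have "nodes ?T3 < nodes t" using n1 by simp
      then obtain r where r: "wf_env r" "red_t r" "env_eq ?T3 r" "nodes r \<le> nodes ?T3" using less(1) wT3 by blast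
      have "env_eq t r" using e1 e2 r(3) by (blast intro: env_eq.trans)
      then show ?thesis using r n3 n1 by (intro exI[of _ r]) auto
    next
      case False
      have "red_t (Node g ts')"
        using False f nth' l' by (simp add: red_l_nth) (metis add.commute)
      then show ?thesis using wT' e1 n1 by blast
    qed
  qed
qed



theorem theorem2p8:
  shows "\<exists>f :: bnc tree \<Rightarrow> bnc.
     (\<forall>t. wf_env t \<longrightarrow> is_bnc (f t) \<and> bsize (f t) = nleaves t) \<and>
     (\<forall>t s. wf_env t \<longrightarrow> wf_env s \<longrightarrow> (f t = f s \<longleftrightarrow> env_eq t s)) \<and>
     (\<forall>c. is_bnc c \<longrightarrow> (\<exists>t. wf_env t \<and> f t = c)) \<and>
     f Leaf = bnc_unit \<and>
     (\<forall>t s i. wf_env t \<longrightarrow> wf_env s \<longrightarrow> 1 \<le> i \<longrightarrow> i \<le> nleaves t \<longrightarrow>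
        f (graft t i s) = cncb_comp (f t) i (f s))"
proof (intro exI[of _ F] conjI allI impI)
  fix t assume "wf_env t"
  then show "is_bnc (F t)" by (rule F_bnc)
  show "bsize (F t) = nleaves t" by (rule F_size)
next
  fix t s assume wt: "wf_env t" and ws: "wf_env s"
  show "F t = F s \<longleftrightarrow> env_eq t s"
  proof
    assume eq: "F t = F s"
    obtain r where r: "wf_env r" "red_t r" "env_eq t r" using reduce[OF wt] by blast
    obtain r' where r': "wf_env r'" "red_t r'" "env_eq s r'" using reduce[OF ws] by blast
    have "F r = F r'" using F_env[OF r(3)] F_env[OF r'(3)] eq by simp
    then have "r = r'" using uniq_root[OF r(1) r'(1) r(2) r'(2)] by simp
    then show "env_eq t s" using r(3) r'(3) by (blast intro: env_eq.trans env_eq.sym)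
  next
    assume "env_eq t s" then show "F t = F s" by (rule F_env)
  qed
next
  fix c assume "is_bnc c" then show "\<exists>t. wf_env t \<and> F t = c" by (rule surj_F)
next
  show "F Leaf = bnc_unit" by (rule F_Leaf)
next
  fix t s i assume "wf_env t" "wf_env s" "1 \<le> i" "i \<le> nleaves t"
  then show "F (graft t i s) = cncb_comp (F t) i (F s)" by (rule F_graft)
qed


end
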